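(* Let $A$ be a commutative DGA and $\lambda=(0\to Z\to\widetilde L\xrightarrow{\pi}L\to0,\ Z\cong\mathbb{Q}[q])$ an MC-product data. Let $\alpha\in A^+\otimes L$ be a Maurer–Cartan element. Let $\tilde\alpha,\tilde\alpha_1\in A^+\otimes\widetilde L$ be two degree-one lifts of $\alpha$. Then $F(\tilde\alpha)$ and $F(\tilde\alpha_1)$, viewed as cocycles in $A^+\otimes Z\cong A^+[q]$, define the same cohomology class in $H^{2-q}(A)$. That is, this class depends only on $\alpha$.
   Context: All algebras are over $\mathbb{Q}$. A commutative DGA $(A,d)$ is a graded-commutative algebra $A=\bigoplus_{i\ge0}A^i$ with a degree $+1$ derivation $d$, $d^2=0$; $A^+=\bigoplus_{i>0}A^i$. A DGLA is a graded Lie algebra with a degree $+1$ differential which is a derivation. It is nilpotent if its lower central series terminates at $0$. For a DGLA $(L,d_L)$, $A\otimes L$ is the DGLA with total grading, bracket $[b_1\otimes w_1,b_2\otimes w_2]=(-1)^{|w_1||b_2|}b_1b_2\otimes[w_1,w_2]$ and differential $d(b\otimes w)=d_Ab\otimes w+(-1)^{|b|}b\otimes d_Lw$. For degree-one $\alpha$, $F(\alpha)=d\alpha+\tfrac12[\alpha,\alpha]$; $\alpha$ is Maurer–Cartan if $F(\alpha)=0$. An MC-product data consists of: - a central extension $0\to Z\to\widetilde L\xrightarrow{\pi}L\to0$ of nilpotent DGLAs (differentials $\tilde d_L$, $d_L$) concentrated in nonpositive degrees, with $Z\subseteq\ker\tilde d_L$ and $\operatorname{Im}\tilde d_L\cap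 Z=0$; - an isomorphism $Z\cong\mathbb{Q}[q]$ ($q\le0$). For a lift $\tilde\alpha$ of an MC element, $F(\tilde\alpha)\in A^+\otimes Z$ and it is a cocycle. *)

theory Defs
  imports Complex_Main
begin

definition pm :: "int \<Rightarrow> rat" where
  "pm k = (if even k then 1 else -1)"

definition graded_vs :: "(rat \<Rightarrow> 'v::ab_group_add \<Rightarrow> 'v) \<Rightarrow> ('i \<Rightarrow> 'v set) \<Rightarrow> bool" where
  "graded_vs s G \<longleftrightarrow> vector_space s \<and> (\<forall>i. module.subspace s (G i)) \<and>
     (\<forall>x. \<exists>!f. finite {i. f i \<noteq> 0} \<and> (\<forall>i. f i \<in> G i) \<and> x = (\<Sum>i\<in>{i. f i \<noteq> 0}. f i))"

definition cdga :: "(rat \<Rightarrow> 'a::ring \<Rightarrow> 'a) \<Rightarrow> (nat \<Rightarrow> 'a set) \<Rightarrow> ('a \<Rightarrow> 'a) \<Rightarrow> bool" where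
  "cdga sA Ad dA \<longleftrightarrow> graded_vs sA Ad \<and>
     (\<forall>c x y. sA c (x * y) = sA c x * y \<and> sA c (x * y) = x * sA c y) \<and>
     (\<forall>i j x y. x \<in> Ad i \<longrightarrow> y \<in> Ad j \<longrightarrow>
        x * y \<in> Ad (i + j) \<and> x * y = sA (pm (int i * int j)) (y * x)) \<and>
     Vector_Spaces.linear sA sA dA \<and>
     (\<forall>i x. x \<in> Ad i \<longrightarrow> dA x \<in> Ad (Suc i)) \<and>
     (\<forall>x. dA (dA x) = 0) \<and>
     (\<forall>i x y. x \<in> Ad i \<longrightarrow> dA (x * y) = dA x * y + sA (pm (int i)) (x * dA y))"

definition bilinear_map :: "(rat \<Rightarrow> 'u::ab_group_add \<Rightarrow> 'u) \<Rightarrow> (rat \<Rightarrow> 'v::ab_group_add \<Rightarrow> 'v)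
    \<Rightarrow> (rat \<Rightarrow> 'w::ab_group_add \<Rightarrow> 'w) \<Rightarrow> ('u \<Rightarrow> 'v \<Rightarrow> 'w) \<Rightarrow> bool" where
  "bilinear_map s1 s2 s3 b \<longleftrightarrow>
     (\<forall>y. Vector_Spaces.linear s1 s3 (\<lambda>x. b x y)) \<and> (\<forall>x. Vector_Spaces.linear s2 s3 (b x))"

definition dgla :: "(rat \<Rightarrow> 'l::ab_group_add \<Rightarrow> 'l) \<Rightarrow> (int \<Rightarrow> 'l set)
    \<Rightarrow> ('l \<Rightarrow> 'l \<Rightarrow> 'l) \<Rightarrow> ('l \<Rightarrow> 'l) \<Rightarrow> bool" where
  "dgla s Ld br d \<longleftrightarrow> graded_vs s Ld \<and> bilinear_map s s s br \<and>
     (\<forall>i j x y. x \<in> Ld i \<longrightarrow> y \<in> Ld j \<longrightarrow>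
        br x y \<in> Ld (i + j) \<and> br x y = - s (pm (i * j)) (br y x)) \<and>
     (\<forall>i j k x y z. x \<in> Ld i \<longrightarrow> y \<in> Ld j \<longrightarrow> z \<in> Ld k \<longrightarrow>
        s (pm (i * k)) (br x (br y z)) + s (pm (j * i)) (br y (br z x))
          + s (pm (k * j)) (br z (br x y)) = 0) \<and>
     Vector_Spaces.linear s s d \<and>
     (\<forall>i x. x \<in> Ld i \<longrightarrow> d x \<in> Ld (i + 1)) \<and>
     (\<forall>x. d (d x) = 0) \<and>
     (\<forall>i x y. x \<in> Ld i \<longrightarrow> d (br x y) = br (d x) y + s (pm i) (br x (d y)))"

fun lcs :: "(rat \<Rightarrow> 'l::ab_group_add \<Rightarrow> 'l) \<Rightarrow> ('l \<Rightarrow> 'l \<Rightarrow> 'l) \<Rightarrow> nat \<Rightarrow> 'l set" where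
  "lcs s br 0 = UNIV"
| "lcs s br (Suc n) = module.span s {br x y | x y. y \<in> lcs s br n}"

definition nilpotent_la :: "(rat \<Rightarrow> 'l::ab_group_add \<Rightarrow> 'l) \<Rightarrow> ('l \<Rightarrow> 'l \<Rightarrow> 'l) \<Rightarrow> bool" where
  "nilpotent_la s br \<longleftrightarrow> (\<exists>n. lcs s br n = {0})"

definition nonpos_graded :: "(int \<Rightarrow> 'l::zero set) \<Rightarrow> bool" where
  "nonpos_graded Ld \<longleftrightarrow> (\<forall>j>0. Ld j = {0})"

definition dgla_hom :: "(rat \<Rightarrow> 'l::ab_group_add \<Rightarrow> 'l) \<Rightarrow> (int \<Rightarrow> 'l set) \<Rightarrow> ('l \<Rightarrow> 'l \<Rightarrow> 'l) \<Rightarrow> ('l \<Rightarrow> 'l)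
    \<Rightarrow> (rat \<Rightarrow> 'm::ab_group_add \<Rightarrow> 'm) \<Rightarrow> (int \<Rightarrow> 'm set) \<Rightarrow> ('m \<Rightarrow> 'm \<Rightarrow> 'm) \<Rightarrow> ('m \<Rightarrow> 'm)
    \<Rightarrow> ('l \<Rightarrow> 'm) \<Rightarrow> bool" where
  "dgla_hom s1 G1 br1 d1 s2 G2 br2 d2 f \<longleftrightarrow> Vector_Spaces.linear s1 s2 f \<and>
     (\<forall>j x. x \<in> G1 j \<longrightarrow> f x \<in> G2 j) \<and>
     (\<forall>x y. f (br1 x y) = br2 (f x) (f y)) \<and> (\<forall>x. f (d1 x) = d2 (f x))"

text \<open>Central extension 0 \<rightarrow> Z \<rightarrow> Lt \<rightarrow> L \<rightarrow> 0 with Z = ker pi, of nilpotent DGLAs in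
  nonpositive degrees, Z \<subseteq> ker dT, Im dT \<inter> Z = 0, and the isomorphism Z \<cong> Q[q]
  given by a nonzero generator e of Z of degree q \<le> 0 (Z = Q e).\<close>

definition mc_product_data ::
  "(rat \<Rightarrow> 'l::ab_group_add \<Rightarrow> 'l) \<Rightarrow> (int \<Rightarrow> 'l set) \<Rightarrow> ('l \<Rightarrow> 'l \<Rightarrow> 'l) \<Rightarrow> ('l \<Rightarrow> 'l)
   \<Rightarrow> (rat \<Rightarrow> 'm::ab_group_add \<Rightarrow> 'm) \<Rightarrow> (int \<Rightarrow> 'm set) \<Rightarrow> ('m \<Rightarrow> 'm \<Rightarrow> 'm) \<Rightarrow> ('m \<Rightarrow> 'm)
   \<Rightarrow> ('l \<Rightarrow> 'm) \<Rightarrow> int \<Rightarrow> 'l \<Rightarrow> bool" where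
  "mc_product_data sT GT brT dT sL GL brL dL \<pi> q e \<longleftrightarrow>
     dgla sT GT brT dT \<and> dgla sL GL brL dL \<and>
     nilpotent_la sT brT \<and> nilpotent_la sL brL \<and>
     nonpos_graded GT \<and> nonpos_graded GL \<and>
     dgla_hom sT GT brT dT sL GL brL dL \<pi> \<and> surj \<pi> \<and>
     (\<forall>x z. \<pi> z = 0 \<longrightarrow> brT x z = 0) \<and>
     (\<forall>z. \<pi> z = 0 \<longrightarrow> dT z = 0) \<and>
     (\<forall>x. \<pi> (dT x) = 0 \<longrightarrow> dT x = 0) \<and>
     q \<le> 0 \<and> e \<in> GT q \<and> e \<noteq> 0 \<and> {z. \<pi> z = 0} = range (\<lambda>c. sT c e)"

text \<open>An element of A \<otimes> L is represented by a finite formal sum of pure tensors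
  a \<otimes> w of homogeneous elements, each entry recording the degrees: ((i,a),(j,w))
  with a \<in> A^i, w \<in> L^j, total degree i + j.  Two formal sums represent the same
  element of A \<otimes> L (over the field Q) iff every Q-bilinear form A \<times> L \<rightarrow> Q takes the
  same value on them (the linear dual of A \<otimes> L is the space of bilinear forms and
  separates points).\<close>

type_synonym ('a, 'l) ftens = "((nat \<times> 'a) \<times> (int \<times> 'l)) list"

definition wf_tens :: "(nat \<Rightarrow> 'a set) \<Rightarrow> (int \<Rightarrow> 'l set) \<Rightarrow> ('a, 'l) ftens \<Rightarrow> bool" where
  "wf_tens Ad Ld x \<longleftrightarrow> (\<forall>((i, a), (j, w)) \<in> set x. a \<in> Ad i \<and> w \<in> Ld j)"

definition tens_eval :: "('a \<Rightarrow> 'l \<Rightarrow> rat) \<Rightarrow> ('a, 'l) ftens \<Rightarrow> rat" where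
  "tens_eval \<beta> x = (\<Sum>((i, a), (j, w)) \<leftarrow> x. \<beta> a w)"

definition teq :: "(rat \<Rightarrow> 'a::ab_group_add \<Rightarrow> 'a) \<Rightarrow> (rat \<Rightarrow> 'l::ab_group_add \<Rightarrow> 'l)
    \<Rightarrow> ('a, 'l) ftens \<Rightarrow> ('a, 'l) ftens \<Rightarrow> bool" where
  "teq sA sL x y \<longleftrightarrow> (\<forall>\<beta>. bilinear_map sA sL (*) \<beta> \<longrightarrow> tens_eval \<beta> x = tens_eval \<beta> y)"

definition tdiff :: "(rat \<Rightarrow> 'a \<Rightarrow> 'a) \<Rightarrow> ('a \<Rightarrow> 'a) \<Rightarrow> ('l \<Rightarrow> 'l) \<Rightarrow> ('a, 'l) ftens \<Rightarrow> ('a, 'l) ftens" where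
  "tdiff sA dA dL x = concat (map (\<lambda>((i, a), (j, w)).
      [((Suc i, dA a), (j, w)), ((i, sA (pm (int i)) a), (j + 1, dL w))]) x)"

definition tbr :: "(rat \<Rightarrow> 'a::times \<Rightarrow> 'a) \<Rightarrow> ('l \<Rightarrow> 'l \<Rightarrow> 'l)
    \<Rightarrow> ('a, 'l) ftens \<Rightarrow> ('a, 'l) ftens \<Rightarrow> ('a, 'l) ftens" where
  "tbr sA br x y = concat (map (\<lambda>((i1, a1), (j1, w1)). map (\<lambda>((i2, a2), (j2, w2)).
      ((i1 + i2, sA (pm (j1 * int i2)) (a1 * a2)), (j1 + j2, br w1 w2))) y) x)"

definition MC_F :: "(rat \<Rightarrow> 'a::times \<Rightarrow> 'a) \<Rightarrow> ('a \<Rightarrow> 'a) \<Rightarrow> ('l \<Rightarrow> 'l \<Rightarrow> 'l) \<Rightarrow> ('l \<Rightarrow> 'l)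
    \<Rightarrow> ('a, 'l) ftens \<Rightarrow> ('a, 'l) ftens" where
  "MC_F sA dA br dL x = tdiff sA dA dL x @
      map (\<lambda>((i, a), jw). ((i, sA (1/2) a), jw)) (tbr sA br x x)"

definition tdeg_one :: "('a, 'l) ftens \<Rightarrow> bool" where
  "tdeg_one x \<longleftrightarrow> (\<forall>((i, a), (j, w)) \<in> set x. int i + j = 1)"

definition in_Aplus :: "('a, 'l) ftens \<Rightarrow> bool" where
  "in_Aplus x \<longleftrightarrow> (\<forall>((i, a), jw) \<in> set x. i > 0)"

definition tmap :: "('l \<Rightarrow> 'm) \<Rightarrow> ('a, 'l) ftens \<Rightarrow> ('a, 'm) ftens" where
  "tmap f x = map (\<lambda>(ia, (j, w)). (ia, (j, f w))) x"

text \<open>Elements of A^+ \<otimes> Z (entries with Lt-component in Z = ker pi), and the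
  identification A \<otimes> Z \<cong> A (shift by q) induced by Z \<cong> Q[q], c e \<mapsto> c.\<close>

definition in_AplusZ :: "(nat \<Rightarrow> 'a set) \<Rightarrow> (int \<Rightarrow> 'l set) \<Rightarrow> ('l \<Rightarrow> 'm::zero) \<Rightarrow> ('a, 'l) ftens \<Rightarrow> bool" where
  "in_AplusZ Ad Ld \<pi> x \<longleftrightarrow> wf_tens Ad Ld x \<and> in_Aplus x \<and> (\<forall>(ia, (j, w)) \<in> set x. \<pi> w = 0)"

definition zcoef :: "(rat \<Rightarrow> 'l \<Rightarrow> 'l) \<Rightarrow> 'l \<Rightarrow> 'l \<Rightarrow> rat" where
  "zcoef s e z = (THE c. z = s c e)"

definition phiZ :: "(rat \<Rightarrow> 'a::ab_group_add \<Rightarrow> 'a) \<Rightarrow> (rat \<Rightarrow> 'l \<Rightarrow> 'l) \<Rightarrow> 'l \<Rightarrow> ('a, 'l) ftens \<Rightarrow> 'a" where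
  "phiZ sA sL e x = (\<Sum>((i, a), (j, z)) \<leftarrow> x. sA (zcoef sL e z) a)"

end

theory Submission
  imports Defs
begin


lemma vs_rat: "vector_space ((*) :: rat \<Rightarrow> rat \<Rightarrow> rat)"
  by unfold_locales (auto simp: algebra_simps)

lemma linD:
  assumes "Vector_Spaces.linear s1 s2 f"
  shows "f (x + y) = f x + f y" "f (s1 c x) = s2 c (f x)" "f 0 = 0" "f (- x) = - f x"
    "f (x - y) = f x - f y"
  using module_hom.add[OF assms[folded module_hom_iff_linear]]
    module_hom.scale[OF assms[folded module_hom_iff_linear]]
    module_hom.zero[OF assms[folded module_hom_iff_linear]]
    module_hom.neg[OF assms[folded module_hom_iff_linear]]
    module_hom.diff[OF assms[folded module_hom_iff_linear]] by auto

lemma lin_vs: assumes "Vector_Spaces.linear s1 s2 f" shows "vector_space s1" "vector_space s2"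
  using assms by (auto simp: Vector_Spaces.linear_iff)

lemma linI:
  assumes "vector_space s1" "vector_space s2" "\<And>x y. f (x + y) = f x + f y"
    "\<And>c x. f (s1 c x) = s2 c (f x)"
  shows "Vector_Spaces.linear s1 s2 f"
  using assms by (auto simp: Vector_Spaces.linear_iff)

definition decP :: "('i \<Rightarrow> 'v::ab_group_add set) \<Rightarrow> 'v \<Rightarrow> ('i \<Rightarrow> 'v) \<Rightarrow> bool" where
  "decP G x f \<longleftrightarrow> finite {i. f i \<noteq> 0} \<and> (\<forall>i. f i \<in> G i) \<and> x = (\<Sum>i\<in>{i. f i \<noteq> 0}. f i)"

definition dec :: "('i \<Rightarrow> 'v::ab_group_add set) \<Rightarrow> 'v \<Rightarrow> 'i \<Rightarrow> 'v" where
  "dec G x = (THE f. decP G x f)"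

definition gop :: "(rat \<Rightarrow> 'v::ab_group_add \<Rightarrow> 'v) \<Rightarrow> ('i \<Rightarrow> 'v set) \<Rightarrow> ('i \<Rightarrow> rat) \<Rightarrow> 'v \<Rightarrow> 'v" where
  "gop s G sg x = (\<Sum>i\<in>{i. dec G x i \<noteq> 0}. s (sg i) (dec G x i))"

lemma sum_supp_super:
  assumes "finite S" "{i. f i \<noteq> 0} \<subseteq> S" "\<And>i. h i 0 = 0"
  shows "(\<Sum>i\<in>{i. f i \<noteq> 0}. h i (f i)) = (\<Sum>i\<in>S. h i (f i))"
  by (rule sum.mono_neutral_left) (use assms in auto)

context
  fixes s :: "rat \<Rightarrow> 'v::ab_group_add \<Rightarrow> 'v" and G :: "'i \<Rightarrow> 'v set"
  assumes gv: "graded_vs s G"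
begin

lemma gv_vs: "vector_space s" using gv by (simp add: graded_vs_def)
lemma gv_mod: "module s" using gv_vs by (simp add: module_iff_vector_space)
lemma gv_sub: "module.subspace s (G i)" using gv by (simp add: graded_vs_def)
lemma gv_0: "0 \<in> G i" using module.subspace_0[OF gv_mod gv_sub] .
lemma gv_add: "x \<in> G i \<Longrightarrow> y \<in> G i \<Longrightarrow> x + y \<in> G i" using module.subspace_add[OF gv_mod gv_sub] .
lemma gv_scale: "x \<in> G i \<Longrightarrow> s c x \<in> G i" using module.subspace_scale[OF gv_mod gv_sub] .
lemma gv_neg: "x \<in> G i \<Longrightarrow> - x \<in> G i" using module.subspace_neg[OF gv_mod gv_sub] .
lemma gv_diff: "x \<in> G i \<Longrightarrow> y \<in> G i \<Longrightarrow> x - y \<in> G i" using module.subspace_diff[OF gv_mod gv_sub] .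

lemma s_simps: "s c (x + y) = s c x + s c y" "s (a + b) x = s a x + s b x" "s a (s b x) = s (a * b) x"
  "s 1 x = x" "s 0 x = 0" "s c 0 = 0" "s c (- x) = - s c x" "s (- a) x = - s a x"
  "s c (x - y) = s c x - s c y"
  using gv_vs gv_mod by (auto simp: vector_space.vector_space_assms module.scale_zero_left
      module.scale_zero_right module.scale_minus_right module.scale_minus_left
      module.scale_right_diff_distrib)

lemma dec_ex: "\<exists>!f. decP G x f" using gv unfolding graded_vs_def decP_def by blast

lemma dec_P: "decP G x (dec G x)"
  unfolding dec_def using theI'[OF dec_ex] .

lemma dec_unique: "decP G x f \<Longrightarrow> dec G x = f"
  using dec_ex dec_P by blast

lemma dec_hom: assumes "x \<in> G i" shows "dec G x = (\<lambda>k. if k = i then x else 0)"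
proof (rule dec_unique)
  have supp: "{k. (if k = i then x else 0) \<noteq> 0} = (if x = 0 then {} else {i})" by auto
  show "decP G x (\<lambda>k. if k = i then x else 0)"
    unfolding decP_def supp using assms gv_0 by auto
qed

lemma gop_hom: assumes "x \<in> G i" shows "gop s G sg x = s (sg i) x"
proof -
  have supp: "{k. (if k = i then x else 0) \<noteq> 0} = (if x = 0 then {} else {i})" by auto
  show ?thesis unfolding gop_def dec_hom[OF assms] supp using s_simps by auto
qed

lemma gop_eq_sum: assumes "finite S" "{i. dec G x i \<noteq> 0} \<subseteq> S"
  shows "gop s G sg x = (\<Sum>i\<in>S. s (sg i) (dec G x i))"
  unfolding gop_def by (rule sum_supp_super[OF assms]) (simp add: s_simps)

lemma dec_add: "dec G (x + y) = (\<lambda>i. dec G x i + dec G y i)"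
proof (rule dec_unique)
  let ?f = "dec G x" and ?g = "dec G y"
  let ?S = "{i. ?f i \<noteq> 0} \<union> {i. ?g i \<noteq> 0}"
  have fx: "finite {i. ?f i \<noteq> 0}" "\<forall>i. ?f i \<in> G i" "x = (\<Sum>i\<in>{i. ?f i \<noteq> 0}. ?f i)"
    using dec_P[of x] unfolding decP_def by auto
  have fy: "finite {i. ?g i \<noteq> 0}" "\<forall>i. ?g i \<in> G i" "y = (\<Sum>i\<in>{i. ?g i \<noteq> 0}. ?g i)"
    using dec_P[of y] unfolding decP_def by auto
  have fS: "finite ?S" using fx fy by auto
  have sub: "{i. ?f i + ?g i \<noteq> 0} \<subseteq> ?S" by auto
  have "x = (\<Sum>i\<in>?S. ?f i)" using fx(3) sum_supp_super[OF fS, of ?f "\<lambda>i v. v"] by auto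
  moreover have "y = (\<Sum>i\<in>?S. ?g i)" using fy(3) sum_supp_super[OF fS, of ?g "\<lambda>i v. v"] by auto
  moreover have "(\<Sum>i\<in>{i. ?f i + ?g i \<noteq> 0}. ?f i + ?g i) = (\<Sum>i\<in>?S. ?f i + ?g i)"
    using sum_supp_super[OF fS sub, of "\<lambda>i v. v"] by auto
  ultimately show "decP G (x + y) (\<lambda>i. ?f i + ?g i)"
    unfolding decP_def using fS sub finite_subset fx(2) fy(2) gv_add
    by (auto simp: sum.distrib)
qed

lemma dec_scale: "dec G (s c x) = (\<lambda>i. s c (dec G x i))"
proof (rule dec_unique)
  let ?f = "dec G x"
  have fx: "finite {i. ?f i \<noteq> 0}" "\<forall>i. ?f i \<in> G i" "x = (\<Sum>i\<in>{i. ?f i \<noteq> 0}. ?f i)"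
    using dec_P[of x] unfolding decP_def by auto
  have sub: "{i. s c (?f i) \<noteq> 0} \<subseteq> {i. ?f i \<noteq> 0}" using s_simps by auto
  have "(\<Sum>i\<in>{i. s c (?f i) \<noteq> 0}. s c (?f i)) = (\<Sum>i\<in>{i. ?f i \<noteq> 0}. s c (?f i))"
    using sum_supp_super[OF fx(1) sub, of "\<lambda>i v. v"] by auto
  also have "\<dots> = s c x"
    using fx(3) module.scale_sum_right[OF gv_mod] by metis
  finally show "decP G (s c x) (\<lambda>i. s c (?f i))"
    unfolding decP_def using fx(1) sub finite_subset fx(2) gv_scale by auto
qed

lemma gop_linear: "Vector_Spaces.linear s s (gop s G sg)"
proof (rule linI[OF gv_vs gv_vs])
  fix x y
  let ?S = "{i. dec G x i \<noteq> 0} \<union> {i. dec G y i \<noteq> 0}"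
  have fS: "finite ?S" using dec_P[of x] dec_P[of y] unfolding decP_def by auto
  have sub: "{i. dec G (x + y) i \<noteq> 0} \<subseteq> ?S" by (auto simp: dec_add)
  show "gop s G sg (x + y) = gop s G sg x + gop s G sg y"
    using gop_eq_sum[OF fS sub, of sg] gop_eq_sum[OF fS, of x sg] gop_eq_sum[OF fS, of y sg]
    by (auto simp: dec_add s_simps sum.distrib)
next
  fix c x
  let ?S = "{i. dec G x i \<noteq> 0}"
  have fS: "finite ?S" using dec_P[of x] unfolding decP_def by auto
  have sub: "{i. dec G (s c x) i \<noteq> 0} \<subseteq> ?S" by (auto simp: dec_scale s_simps)
  show "gop s G sg (s c x) = s c (gop s G sg x)"
    using gop_eq_sum[OF fS sub, of sg] gop_eq_sum[OF fS _, of x sg]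
    by (auto simp: dec_scale s_simps mult.commute module.scale_sum_right[OF gv_mod])
qed

end



definition ev :: "('a \<Rightarrow> 'l \<Rightarrow> rat) \<Rightarrow> ((nat \<times> 'a) \<times> (int \<times> 'l)) \<Rightarrow> rat" where
  "ev \<beta> t = (case t of ((i, a), (j, w)) \<Rightarrow> \<beta> a w)"

lemma ev_simp[simp]: "ev \<beta> ((i, a), (j, w)) = \<beta> a w" by (simp add: ev_def)

lemma E_def': "tens_eval \<beta> x = sum_list (map (ev \<beta>) x)"
  unfolding tens_eval_def ev_def by (rule arg_cong[where f=sum_list], rule map_cong) (auto split: prod.splits)

lemma E_Nil[simp]: "tens_eval \<beta> [] = 0" by (simp add: E_def')
lemma E_append[simp]: "tens_eval \<beta> (x @ y) = tens_eval \<beta> x + tens_eval \<beta> y" by (simp add: E_def')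
lemma E_Cons: "tens_eval \<beta> (t # y) = ev \<beta> t + tens_eval \<beta> y" by (simp add: E_def')
lemma E_concat: "tens_eval \<beta> (concat xs) = sum_list (map (tens_eval \<beta>) xs)"
  by (induct xs) auto

definition tb :: "(rat \<Rightarrow> 'a::times \<Rightarrow> 'a) \<Rightarrow> ('l \<Rightarrow> 'l \<Rightarrow> 'l) \<Rightarrow> ((nat \<times> 'a) \<times> (int \<times> 'l))
    \<Rightarrow> ((nat \<times> 'a) \<times> (int \<times> 'l)) \<Rightarrow> ((nat \<times> 'a) \<times> (int \<times> 'l))" where
  "tb sA br t1 t2 = (case t1 of ((i1, a1), (j1, w1)) \<Rightarrow> case t2 of ((i2, a2), (j2, w2)) \<Rightarrow>
     ((i1 + i2, sA (pm (j1 * int i2)) (a1 * a2)), (j1 + j2, br w1 w2)))"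

lemma tb_simp[simp]: "tb sA br ((i1, a1), (j1, w1)) ((i2, a2), (j2, w2)) =
     ((i1 + i2, sA (pm (j1 * int i2)) (a1 * a2)), (j1 + j2, br w1 w2))"
  by (simp add: tb_def)

lemma tbr_alt: "tbr sA br x y = concat (map (\<lambda>t1. map (tb sA br t1) y) x)"
  unfolding tbr_def tb_def by (intro arg_cong[where f=concat] map_cong refl) (auto split: prod.splits)

definition td1 :: "('a \<Rightarrow> 'a) \<Rightarrow> ((nat \<times> 'a) \<times> (int \<times> 'l)) \<Rightarrow> ((nat \<times> 'a) \<times> (int \<times> 'l))" where
  "td1 dA t = (case t of ((i, a), (j, w)) \<Rightarrow> ((Suc i, dA a), (j, w)))"
definition td2 :: "(rat \<Rightarrow> 'a \<Rightarrow> 'a) \<Rightarrow> ('l \<Rightarrow> 'l) \<Rightarrow> ((nat \<times> 'a) \<times> (int \<times> 'l)) \<Rightarrow> ((nat \<times> 'a) \<times> (int \<times> 'l))" where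
  "td2 sA dL t = (case t of ((i, a), (j, w)) \<Rightarrow> ((i, sA (pm (int i)) a), (j + 1, dL w)))"

lemma td_simps[simp]: "td1 dA ((i, a), (j, w)) = ((Suc i, dA a), (j, w))"
  "td2 sA dL ((i, a), (j, w)) = ((i, sA (pm (int i)) a), (j + 1, dL w))"
  by (simp_all add: td1_def td2_def)

lemma tdiff_alt: "tdiff sA dA dL x = concat (map (\<lambda>t. [td1 dA t, td2 sA dL t]) x)"
  unfolding tdiff_def td1_def td2_def by (intro arg_cong[where f=concat] map_cong refl) (auto split: prod.splits)

lemma E_tbr: "tens_eval \<beta> (tbr sA br x y) = (\<Sum>t1\<leftarrow>x. \<Sum>t2\<leftarrow>y. ev \<beta> (tb sA br t1 t2))"
  unfolding tbr_alt E_concat by (simp add: E_def' o_def)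

lemma E_tdiff: "tens_eval \<beta> (tdiff sA dA dL x) = (\<Sum>t\<leftarrow>x. ev \<beta> (td1 dA t) + ev \<beta> (td2 sA dL t))"
  unfolding tdiff_alt E_concat by (simp add: E_def' o_def)

definition half :: "(rat \<Rightarrow> 'a \<Rightarrow> 'a) \<Rightarrow> ((nat \<times> 'a) \<times> (int \<times> 'l)) \<Rightarrow> ((nat \<times> 'a) \<times> (int \<times> 'l))" where
  "half sA t = (case t of ((i, a), jw) \<Rightarrow> ((i, sA (1/2) a), jw))"

lemma MC_alt: "MC_F sA dA br dL x = tdiff sA dA dL x @ map (half sA) (tbr sA br x x)"
  unfolding MC_F_def half_def by (intro arg_cong2[where f="(@)"] map_cong refl) (auto split: prod.splits)

lemma sl_cong: "(\<And>x. x \<in> set xs \<Longrightarrow> f x = g x) \<Longrightarrow> sum_list (map f xs) = sum_list (map g xs)"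
  by (metis map_cong)

lemma sl_swap: "(\<Sum>a\<leftarrow>xs. \<Sum>b\<leftarrow>ys. f a b) = (\<Sum>b\<leftarrow>ys. \<Sum>a\<leftarrow>xs. (f a b :: 'c::comm_monoid_add))"
  by (induct xs) (auto simp: sum_list_addf)

lemma sl_zero: "(\<And>x. x \<in> set xs \<Longrightarrow> f x = 0) \<Longrightarrow> sum_list (map f xs) = (0::'c::comm_monoid_add)"
  by (induct xs) auto

lemma sl_mult: "(\<Sum>x\<leftarrow>xs. c * f x) = c * (\<Sum>x\<leftarrow>xs. f x :: rat)"
  by (induct xs) (auto simp: algebra_simps)

lemma pm_add: "pm (a + b) = pm a * pm b" by (auto simp: pm_def)
lemma pm_mult: "pm (a * b) = (if even a \<or> even b then 1 else -1)" by (auto simp: pm_def)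
lemma pm_sq: "pm a * pm a = 1" by (auto simp: pm_def)




definition tdeg :: "int \<Rightarrow> ((nat \<times> 'a) \<times> (int \<times> 'l)) list \<Rightarrow> bool" where
  "tdeg k x \<longleftrightarrow> (\<forall>((i, a), (j, w)) \<in> set x. int i + j = k)"

lemma tdegD: "tdeg k x \<Longrightarrow> ((i, a), (j, w)) \<in> set x \<Longrightarrow> int i + j = k"
  unfolding tdeg_def by fastforce

lemma wfD: "wf_tens Ad G x \<Longrightarrow> ((i, a), (j, w)) \<in> set x \<Longrightarrow> a \<in> Ad i \<and> w \<in> G j"
  unfolding wf_tens_def by fastforce

lemma wf_append[simp]: "wf_tens Ad G (x @ y) \<longleftrightarrow> wf_tens Ad G x \<and> wf_tens Ad G y"
  unfolding wf_tens_def by (simp add: ball_Un)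

lemma tdeg_append[simp]: "tdeg k (x @ y) \<longleftrightarrow> tdeg k x \<and> tdeg k y"
  unfolding tdeg_def by (simp add: ball_Un)

locale tset =
  fixes sA :: "rat \<Rightarrow> 'a::ring \<Rightarrow> 'a" and Ad :: "nat \<Rightarrow> 'a set" and dA :: "'a \<Rightarrow> 'a"
    and s :: "rat \<Rightarrow> 'l::ab_group_add \<Rightarrow> 'l" and G :: "int \<Rightarrow> 'l set"
    and br :: "'l \<Rightarrow> 'l \<Rightarrow> 'l" and d :: "'l \<Rightarrow> 'l"
  assumes A: "cdga sA Ad dA" and L: "dgla s G br d"
begin

lemma gA: "graded_vs sA Ad" using A by (simp add: cdga_def)
lemma gL: "graded_vs s G" using L by (simp add: dgla_def)
lemma vsA: "vector_space sA" using gv_vs[OF gA] .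
lemma vsL: "vector_space s" using gv_vs[OF gL] .
lemmas sAs = s_simps[OF gA]
lemmas sLs = s_simps[OF gL]
lemma sAm1: "sA (-1) x = - x" by (metis sAs(4,8))
lemma sLm1: "s (-1) x = - x" by (metis sLs(4,8))

lemma A_sm: "sA c (x * y) = sA c x * y" "sA c (x * y) = x * sA c y" using A unfolding cdga_def by blast+
lemma A_deg: "x \<in> Ad i \<Longrightarrow> y \<in> Ad j \<Longrightarrow> x * y \<in> Ad (i + j)" using A unfolding cdga_def by blast
lemma A_comm: "x \<in> Ad i \<Longrightarrow> y \<in> Ad j \<Longrightarrow> x * y = sA (pm (int i * int j)) (y * x)"
  using A unfolding cdga_def by blast
lemma dA_lin: "Vector_Spaces.linear sA sA dA" using A unfolding cdga_def by blast
lemma dA_deg: "x \<in> Ad i \<Longrightarrow> dA x \<in> Ad (Suc i)" using A unfolding cdga_def by blast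
lemma dA_dA: "dA (dA x) = 0" using A unfolding cdga_def by blast
lemma dA_mult: "x \<in> Ad i \<Longrightarrow> dA (x * y) = dA x * y + sA (pm (int i)) (x * dA y)"
  using A unfolding cdga_def by blast
lemmas dAs = linD[OF dA_lin]

lemma br_bil: "bilinear_map s s s br" using L unfolding dgla_def by blast
lemma br_deg: "x \<in> G i \<Longrightarrow> y \<in> G j \<Longrightarrow> br x y \<in> G (i + j)" using L unfolding dgla_def by blast
lemma br_anti: "x \<in> G i \<Longrightarrow> y \<in> G j \<Longrightarrow> br x y = - s (pm (i * j)) (br y x)"
  using L unfolding dgla_def by blast
lemma jacobi: "x \<in> G i \<Longrightarrow> y \<in> G j \<Longrightarrow> z \<in> G k \<Longrightarrow>
        s (pm (i * k)) (br x (br y z)) + s (pm (j * i)) (br y (br z x))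
          + s (pm (k * j)) (br z (br x y)) = 0"
  using L unfolding dgla_def by blast
lemma d_lin: "Vector_Spaces.linear s s d" using L unfolding dgla_def by blast
lemma d_deg: "x \<in> G i \<Longrightarrow> d x \<in> G (i + 1)" using L unfolding dgla_def by blast
lemma d_d: "d (d x) = 0" using L unfolding dgla_def by blast
lemma d_br: "x \<in> G i \<Longrightarrow> d (br x y) = br (d x) y + s (pm i) (br x (d y))"
  using L unfolding dgla_def by blast
lemmas ds = linD[OF d_lin]

lemma brl: "Vector_Spaces.linear s s (\<lambda>x. br x y)" using br_bil by (simp add: bilinear_map_def)
lemma brr: "Vector_Spaces.linear s s (br x)" using br_bil by (simp add: bilinear_map_def)
lemmas brls = linD[OF brl] and brrs = linD[OF brr]

definition PA where "PA = gop sA Ad (\<lambda>i. pm (int i))"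
definition PL where "PL = gop s G pm"
lemma PA_hom: "a \<in> Ad i \<Longrightarrow> PA a = sA (pm (int i)) a" unfolding PA_def using gop_hom[OF gA] .
lemma PL_hom: "w \<in> G j \<Longrightarrow> PL w = s (pm j) w" unfolding PL_def using gop_hom[OF gL] .
lemma PA_lin: "Vector_Spaces.linear sA sA PA" unfolding PA_def using gop_linear[OF gA] .
lemma PL_lin: "Vector_Spaces.linear s s PL" unfolding PL_def using gop_linear[OF gL] .
lemmas PAs = linD[OF PA_lin] and PLs = linD[OF PL_lin]

definition PAp :: "int \<Rightarrow> 'a \<Rightarrow> 'a" where "PAp j a = (if even j then a else PA a)"
definition PLp :: "nat \<Rightarrow> 'l \<Rightarrow> 'l" where "PLp i w = (if even i then w else PL w)"
lemma PAp_hom: "a \<in> Ad i \<Longrightarrow> PAp j a = sA (pm (j * int i)) a"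
  by (auto simp: PAp_def PA_hom pm_mult sAs sAm1 pm_def)
lemma PLp_hom: "w \<in> G j \<Longrightarrow> PLp i w = s (pm (j * int i)) w"
  by (auto simp: PLp_def PL_hom pm_mult sLs sLm1 pm_def)
lemma PAp_lin: "Vector_Spaces.linear sA sA (PAp j)"
  by (cases "even j") (auto simp: PAp_def[abs_def] PA_lin vector_space.linear_id[OF vsA, unfolded id_def])
lemma PLp_lin: "Vector_Spaces.linear s s (PLp i)"
  by (cases "even i") (auto simp: PLp_def[abs_def] PL_lin vector_space.linear_id[OF vsL, unfolded id_def])
lemmas PAps = linD[OF PAp_lin] and PLps = linD[OF PLp_lin]

abbreviation bil :: "('a \<Rightarrow> 'l \<Rightarrow> rat) \<Rightarrow> bool" where "bil \<beta> \<equiv> bilinear_map sA s (*) \<beta>"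

lemma bilD:
  assumes "bil \<beta>"
  shows "\<beta> (sA c a) w = c * \<beta> a w" "\<beta> (a + b) w = \<beta> a w + \<beta> b w" "\<beta> 0 w = 0"
    "\<beta> (- a) w = - \<beta> a w" "\<beta> (a - b) w = \<beta> a w - \<beta> b w"
    "\<beta> a (s c w) = c * \<beta> a w" "\<beta> a (w + v) = \<beta> a w + \<beta> a v" "\<beta> a 0 = 0"
    "\<beta> a (- w) = - \<beta> a w" "\<beta> a (w - v) = \<beta> a w - \<beta> a v"
proof -
  have l1: "Vector_Spaces.linear sA (*) (\<lambda>a. \<beta> a w)" for w using assms by (simp add: bilinear_map_def)
  have l2: "Vector_Spaces.linear s (*) (\<beta> a)" for a using assms by (simp add: bilinear_map_def)
  show "\<beta> (sA c a) w = c * \<beta> a w" "\<beta> (a + b) w = \<beta> a w + \<beta> b w" "\<beta> 0 w = 0"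
    "\<beta> (- a) w = - \<beta> a w" "\<beta> (a - b) w = \<beta> a w - \<beta> b w"
    using linD[OF l1[of w]] by auto
  show "\<beta> a (s c w) = c * \<beta> a w" "\<beta> a (w + v) = \<beta> a w + \<beta> a v" "\<beta> a 0 = 0"
    "\<beta> a (- w) = - \<beta> a w" "\<beta> a (w - v) = \<beta> a w - \<beta> a v"
    using linD[OF l2[of a]] by auto
qed

lemma bilI:
  assumes "\<And>a b w. \<beta> (a + b) w = \<beta> a w + \<beta> b w" "\<And>c a w. \<beta> (sA c a) w = c * \<beta> a w"
    "\<And>a w v. \<beta> a (w + v) = \<beta> a w + \<beta> a v" "\<And>c a w. \<beta> a (s c w) = c * \<beta> a w"
  shows "bil \<beta>"
  unfolding bilinear_map_def using assms vsA vsL vs_rat by (auto intro!: linI)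

abbreviation wf where "wf x \<equiv> wf_tens Ad G x"
abbreviation E where "E \<equiv> tens_eval"
abbreviation TD where "TD x \<equiv> tdiff sA dA d x"
abbreviation TB where "TB x y \<equiv> tbr sA br x y"
abbreviation MC where "MC x \<equiv> MC_F sA dA br d x"
abbreviation tq where "tq x y \<equiv> teq sA s x y"

lemma tqD: "tq x y \<Longrightarrow> bil \<beta> \<Longrightarrow> E \<beta> x = E \<beta> y" by (simp add: teq_def)

lemma E_TD_gamma: assumes "wf x" "bil \<beta>"
  shows "E \<beta> (TD x) = E (\<lambda>a w. \<beta> (dA a) w + \<beta> (PA a) (d w)) x"
  unfolding E_tdiff unfolding E_def'
proof (rule sl_cong)
  fix t assume "t \<in> set x"
  then obtain i a j w where t: "t = ((i, a), (j, w))" and aw: "a \<in> Ad i" "w \<in> G j"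
    using wfD[OF assms(1)] by (metis prod.collapse)
  show "ev \<beta> (td1 dA t) + ev \<beta> (td2 sA d t) = ev (\<lambda>a w. \<beta> (dA a) w + \<beta> (PA a) (d w)) t"
    using aw by (simp add: t PA_hom)
qed

lemma gamma_d_bil: "bil \<beta> \<Longrightarrow> bil (\<lambda>a w. \<beta> (dA a) w + \<beta> (PA a) (d w))"
  by (rule bilI) (auto simp: bilD dAs PAs ds algebra_simps)

lemma TD_inv: assumes "wf x" "wf x'" "tq x x'" shows "tq (TD x) (TD x')"
  unfolding teq_def using E_TD_gamma[OF assms(1)] E_TD_gamma[OF assms(2)] gamma_d_bil tqD[OF assms(3)]
  by auto

definition gl where "gl \<beta> t2 = (\<lambda>a1 w1. case t2 of ((i2, a2), (j2, w2)) \<Rightarrow> \<beta> (a1 * a2) (br (PLp i2 w1) w2))"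
definition gr where "gr \<beta> t1 = (\<lambda>a2 w2. case t1 of ((i1, a1), (j1, w1)) \<Rightarrow> \<beta> (a1 * PAp j1 a2) (br w1 w2))"

lemma gl_bil: assumes "bil \<beta>" shows "bil (gl \<beta> t2)"
proof -
  obtain i2 a2 j2 w2 where t: "t2 = ((i2, a2), (j2, w2))" by (metis prod.collapse)
  show ?thesis unfolding t gl_def
    by (rule bilI) (auto simp: bilD[OF assms] PLps brls A_sm(1)[symmetric] distrib_right)
qed

lemma gr_bil: assumes "bil \<beta>" shows "bil (gr \<beta> t1)"
proof -
  obtain i1 a1 j1 w1 where t: "t1 = ((i1, a1), (j1, w1))" by (metis prod.collapse)
  show ?thesis unfolding t gr_def
    by (rule bilI) (auto simp: bilD[OF assms] PAps brrs A_sm(2)[symmetric] distrib_left)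
qed

lemma ev_tb: assumes "bil \<beta>" "a1 \<in> Ad i1" "w1 \<in> G j1" "a2 \<in> Ad i2" "w2 \<in> G j2"
  shows "ev \<beta> (tb sA br ((i1, a1), (j1, w1)) ((i2, a2), (j2, w2))) = pm (j1 * int i2) * \<beta> (a1 * a2) (br w1 w2)"
  by (simp add: bilD[OF assms(1)])

lemma E_TB_left: assumes "wf x" "wf y" "bil \<beta>"
  shows "E \<beta> (TB x y) = (\<Sum>t2\<leftarrow>y. E (gl \<beta> t2) x)"
  unfolding E_tbr
  apply (subst sl_swap)
  apply (rule sl_cong)
  unfolding E_def'
  apply (rule sl_cong)
proof -
  fix t1 t2 assume "t2 \<in> set y" "t1 \<in> set x"
  then obtain i1 a1 j1 w1 i2 a2 j2 w2 where t: "t1 = ((i1, a1), (j1, w1))" "t2 = ((i2, a2), (j2, w2))"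
    and aw: "a1 \<in> Ad i1" "w1 \<in> G j1" "a2 \<in> Ad i2" "w2 \<in> G j2"
    using wfD[OF assms(1)] wfD[OF assms(2)] by (metis prod.collapse)
  show "ev \<beta> (tb sA br t1 t2) = ev (gl \<beta> t2) t1"
    using aw by (simp add: t gl_def PLp_hom brls bilD[OF assms(3)])
qed

lemma E_TB_right: assumes "wf x" "wf y" "bil \<beta>"
  shows "E \<beta> (TB x y) = (\<Sum>t1\<leftarrow>x. E (gr \<beta> t1) y)"
  unfolding E_tbr
  apply (rule sl_cong)
  unfolding E_def'
  apply (rule sl_cong)
proof -
  fix t1 t2 assume "t1 \<in> set x" "t2 \<in> set y"
  then obtain i1 a1 j1 w1 i2 a2 j2 w2 where t: "t1 = ((i1, a1), (j1, w1))" "t2 = ((i2, a2), (j2, w2))"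
    and aw: "a1 \<in> Ad i1" "w1 \<in> G j1" "a2 \<in> Ad i2" "w2 \<in> G j2"
    using wfD[OF assms(1)] wfD[OF assms(2)] by (metis prod.collapse)
  show "ev \<beta> (tb sA br t1 t2) = ev (gr \<beta> t1) t2"
    using aw by (simp add: t gr_def PAp_hom A_sm(2)[symmetric] bilD[OF assms(3)])
qed

lemma TB_inv: assumes "wf x" "wf x'" "wf y" "wf y'" "tq x x'" "tq y y'" "bil \<beta>"
  shows "E \<beta> (TB x y) = E \<beta> (TB x' y')"
proof -
  have "E \<beta> (TB x y) = (\<Sum>t2\<leftarrow>y. E (gl \<beta> t2) x)" using E_TB_left[OF assms(1,3,7)] .
  also have "\<dots> = (\<Sum>t2\<leftarrow>y. E (gl \<beta> t2) x')"
    by (rule sl_cong) (rule tqD[OF assms(5) gl_bil[OF assms(7)]])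
  also have "\<dots> = E \<beta> (TB x' y)" using E_TB_left[OF assms(2,3,7)] by simp
  also have "\<dots> = (\<Sum>t1\<leftarrow>x'. E (gr \<beta> t1) y)" using E_TB_right[OF assms(2,3,7)] .
  also have "\<dots> = (\<Sum>t1\<leftarrow>x'. E (gr \<beta> t1) y')"
    by (rule sl_cong) (rule tqD[OF assms(6) gr_bil[OF assms(7)]])
  also have "\<dots> = E \<beta> (TB x' y')" using E_TB_right[OF assms(2,4,7)] by simp
  finally show ?thesis .
qed

lemma E_half: assumes "bil \<beta>" shows "E \<beta> (map (half sA) z) = 1/2 * E \<beta> z"
  unfolding E_def' map_map sl_mult[symmetric]
  by (rule sl_cong) (auto simp: half_def bilD[OF assms] split: prod.splits)

lemma E_MC: assumes "bil \<beta>" shows "E \<beta> (MC x) = E \<beta> (TD x) + 1/2 * E \<beta> (TB x x)"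
  by (simp add: MC_alt E_half[OF assms])

lemma wf_TD: "wf x \<Longrightarrow> wf (TD x)"
  unfolding wf_tens_def tdiff_alt by (fastforce simp: dA_deg d_deg gv_scale[OF gA] split: prod.splits)
lemma wf_TB: "wf x \<Longrightarrow> wf y \<Longrightarrow> wf (TB x y)"
  unfolding wf_tens_def tbr_alt by (fastforce simp: A_deg br_deg gv_scale[OF gA] split: prod.splits)
lemma wf_half: "wf x \<Longrightarrow> wf (map (half sA) x)"
  unfolding wf_tens_def half_def by (fastforce simp: gv_scale[OF gA] split: prod.splits)
lemma wf_MC: "wf x \<Longrightarrow> wf (MC x)"
  by (simp add: MC_alt wf_TD wf_TB wf_half)

lemma tdeg_TD: "tdeg k x \<Longrightarrow> tdeg (k + 1) (TD x)"
  unfolding tdeg_def tdiff_alt by (fastforce split: prod.splits)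
lemma tdeg_TB: "tdeg k x \<Longrightarrow> tdeg l y \<Longrightarrow> tdeg (k + l) (TB x y)"
  unfolding tdeg_def tbr_alt by (fastforce split: prod.splits)
lemma tdeg_half: "tdeg k x \<Longrightarrow> tdeg k (map (half sA) x)"
  unfolding tdeg_def half_def by (fastforce split: prod.splits)
lemma tdeg_MC: "tdeg 1 x \<Longrightarrow> tdeg 2 (MC x)"
  using tdeg_TD[of 1 x] tdeg_TB[of 1 x 1 x] tdeg_half by (simp add: MC_alt)

lemma MC_inv: assumes "wf x" "wf x'" "tq x x'" shows "tq (MC x) (MC x')"
  unfolding teq_def
proof (intro allI impI)
  fix \<beta> assume b: "bil \<beta>"
  show "E \<beta> (MC x) = E \<beta> (MC x')"
    using E_MC[OF b] tqD[OF TD_inv[OF assms] b] TB_inv[OF assms(1,2,1,2,3,3) b] by simp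
qed

end



lemma sl_concat: "sum_list (map f (concat xs)) = (\<Sum>l\<leftarrow>xs. sum_list (map f l))"
  by (induct xs) auto

lemma pm_Suc: "pm (int (Suc i)) = - pm (int i)" by (auto simp: pm_def)
lemma pm_1: "pm 1 = -1" by (simp add: pm_def)

lemma sl_neg: "(\<Sum>x\<leftarrow>xs. - f x) = - (\<Sum>x\<leftarrow>xs. f x :: rat)"
  by (induct xs) auto

lemma entryD: "wf_tens Ad G x \<Longrightarrow> tdeg k x \<Longrightarrow> t \<in> set x \<Longrightarrow>
   \<exists>i a j w. t = ((i, a), (j, w)) \<and> a \<in> Ad i \<and> w \<in> G j \<and> int i + j = k"
  by (metis prod.collapse tdegD wfD)

lemma tdiff_append: "tdiff sA dA dL (x @ y) = tdiff sA dA dL x @ tdiff sA dA dL y"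
  by (simp add: tdiff_def)

lemma tbr_append: "tbr sA br (x @ y) z = tbr sA br x z @ tbr sA br y z"
  by (simp add: tbr_def)

context tset begin

lemma dd0: assumes "wf x" "bil \<beta>" shows "E \<beta> (TD (TD x)) = 0"
  unfolding E_tdiff
  unfolding tdiff_alt sl_concat map_map o_def
proof (rule sl_zero)
  fix t assume "t \<in> set x"
  then obtain i a j w where t: "t = ((i, a), (j, w))" and aw: "a \<in> Ad i" "w \<in> G j"
    using wfD[OF assms(1)] by (metis prod.collapse)
  show "(\<Sum>s\<leftarrow>[td1 dA t, td2 sA d t]. ev \<beta> (td1 dA s) + ev \<beta> (td2 sA d s)) = 0"
    by (simp add: t bilD[OF assms(2)] dA_dA d_d dAs pm_Suc pm_add pm_1)
qed

lemma E_TD_half: assumes "bil \<beta>" shows "E \<beta> (TD (map (half sA) z)) = 1/2 * E \<beta> (TD z)"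
  unfolding E_tdiff map_map sl_mult[symmetric]
  by (rule sl_cong) (auto simp: half_def bilD[OF assms] dAs sAs split: prod.splits)

lemma E_TB_half: assumes "bil \<beta>" shows "E \<beta> (TB (map (half sA) z) y) = 1/2 * E \<beta> (TB z y)"
  unfolding E_tbr map_map sl_mult[symmetric] o_def
  by (rule sl_cong)+ (auto simp: half_def bilD[OF assms] A_sm(1)[symmetric] sAs mult.commute
      split: prod.splits)

lemma central: assumes "\<And>i a j w i' a' j' w'. ((i, a), (j, w)) \<in> set u \<Longrightarrow> ((i', a'), (j', w')) \<in> set x
    \<Longrightarrow> br w w' = 0" "bil \<beta>"
  shows "E \<beta> (TB u x) = 0"
  unfolding E_tbr
  apply (rule sl_zero)+
  using assms(1) by (fastforce simp: bilD[OF assms(2)] split: prod.splits)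

lemma leib_pt: assumes "bil \<beta>" "a1 \<in> Ad i1" "w1 \<in> G j1" "a2 \<in> Ad i2" "w2 \<in> G j2" "int i1 + j1 = 1"
  shows "ev \<beta> (td1 dA (tb sA br ((i1, a1), (j1, w1)) ((i2, a2), (j2, w2))))
       + ev \<beta> (td2 sA d (tb sA br ((i1, a1), (j1, w1)) ((i2, a2), (j2, w2))))
     = ev \<beta> (tb sA br (td1 dA ((i1, a1), (j1, w1))) ((i2, a2), (j2, w2)))
       + ev \<beta> (tb sA br (td2 sA d ((i1, a1), (j1, w1))) ((i2, a2), (j2, w2)))
       - ev \<beta> (tb sA br ((i1, a1), (j1, w1)) (td1 dA ((i2, a2), (j2, w2))))
       - ev \<beta> (tb sA br ((i1, a1), (j1, w1)) (td2 sA d ((i2, a2), (j2, w2))))"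
proof -
  have j1: "j1 = 1 - int i1" using assms(6) by simp
  show ?thesis
    using assms(2-5)
    apply (simp add: bilD[OF assms(1)] dAs ds dA_mult d_br A_sm(1)[symmetric] A_sm(2)[symmetric] sAs sLs
        brls brrs algebra_simps)
    apply (simp add: j1 pm_def even_add even_mult_iff)
    done
qed

lemma leib: assumes "wf x" "wf y" "tdeg 1 x" "bil \<beta>"
  shows "E \<beta> (TD (TB x y)) = E \<beta> (TB (TD x) y) - E \<beta> (TB x (TD y))"
proof -
  have L: "E \<beta> (TD (TB x y)) = (\<Sum>t1\<leftarrow>x. \<Sum>t2\<leftarrow>y. ev \<beta> (td1 dA (tb sA br t1 t2)) + ev \<beta> (td2 sA d (tb sA br t1 t2)))"
    by (simp add: E_tdiff tbr_alt sl_concat o_def)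
  have R1: "E \<beta> (TB (TD x) y) = (\<Sum>t1\<leftarrow>x. (\<Sum>t2\<leftarrow>y. ev \<beta> (tb sA br (td1 dA t1) t2))
      + (\<Sum>t2\<leftarrow>y. ev \<beta> (tb sA br (td2 sA d t1) t2)))"
    by (simp add: E_tbr tdiff_alt sl_concat o_def)
  have R2: "E \<beta> (TB x (TD y)) = (\<Sum>t1\<leftarrow>x. \<Sum>t2\<leftarrow>y. ev \<beta> (tb sA br t1 (td1 dA t2)) + ev \<beta> (tb sA br t1 (td2 sA d t2)))"
    by (simp add: E_tbr tdiff_alt sl_concat o_def)
  have "E \<beta> (TD (TB x y)) = (\<Sum>t1\<leftarrow>x. (\<Sum>t2\<leftarrow>y. ev \<beta> (tb sA br (td1 dA t1) t2))
      + (\<Sum>t2\<leftarrow>y. ev \<beta> (tb sA br (td2 sA d t1) t2))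
      - (\<Sum>t2\<leftarrow>y. ev \<beta> (tb sA br t1 (td1 dA t2)) + ev \<beta> (tb sA br t1 (td2 sA d t2))))"
    unfolding L
    apply (rule sl_cong)
    apply (simp only: sum_list_addf[symmetric] sum_list_subtractf[symmetric])
    apply (rule sl_cong)
  proof -
    fix t1 t2 assume "t1 \<in> set x" "t2 \<in> set y"
    then obtain i1 a1 j1 w1 i2 a2 j2 w2 where t: "t1 = ((i1, a1), (j1, w1))" "t2 = ((i2, a2), (j2, w2))"
      and aw: "a1 \<in> Ad i1" "w1 \<in> G j1" "a2 \<in> Ad i2" "w2 \<in> G j2" "int i1 + j1 = 1"
      using entryD[OF assms(1,3)] wfD[OF assms(2)] by (metis prod.collapse)
    show "ev \<beta> (td1 dA (tb sA br t1 t2)) + ev \<beta> (td2 sA d (tb sA br t1 t2)) =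
         ev \<beta> (tb sA br (td1 dA t1) t2) + ev \<beta> (tb sA br (td2 sA d t1) t2) -
         (ev \<beta> (tb sA br t1 (td1 dA t2)) + ev \<beta> (tb sA br t1 (td2 sA d t2)))"
      using leib_pt[OF assms(4) aw] unfolding t by simp
  qed
  also have "\<dots> = E \<beta> (TB (TD x) y) - E \<beta> (TB x (TD y))"
    unfolding R1 R2 by (simp only: sum_list_subtractf)
  finally show ?thesis .
qed

lemma anti_pt: assumes "bil \<beta>" "ap \<in> Ad ip" "wp \<in> G jp" "as \<in> Ad is" "ws \<in> G js"
   "int ip + jp = 1" "int is + js = 2"
  shows "ev \<beta> (tb sA br ((ip, ap), (jp, wp)) ((is, as), (js, ws)))
     = - ev \<beta> (tb sA br ((is, as), (js, ws)) ((ip, ap), (jp, wp)))"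
proof -
  have c1: "as * ap = sA (pm (int is * int ip)) (ap * as)" by (rule A_comm[OF assms(4,2)])
  have c2: "br ws wp = - s (pm (js * jp)) (br wp ws)" by (rule br_anti[OF assms(5,3)])
  have j: "jp = 1 - int ip" "js = 2 - int is" using assms(6,7) by auto
  show ?thesis
    apply (simp add: c1 c2 bilD[OF assms(1)] sAs sLs)
    apply (simp add: j pm_def even_add even_mult_iff)
    done
qed

lemma anti: assumes "wf x" "tdeg 1 x" "wf y" "tdeg 2 y" "bil \<beta>"
  shows "E \<beta> (TB x y) = - E \<beta> (TB y x)"
proof -
  have "E \<beta> (TB x y) = (\<Sum>t1\<leftarrow>x. \<Sum>t2\<leftarrow>y. - ev \<beta> (tb sA br t2 t1))"
    unfolding E_tbr
  proof (rule sl_cong, rule sl_cong)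
    fix t1 t2 assume "t1 \<in> set x" "t2 \<in> set y"
    then obtain i1 a1 j1 w1 i2 a2 j2 w2 where t: "t1 = ((i1, a1), (j1, w1))" "t2 = ((i2, a2), (j2, w2))"
      and aw: "a1 \<in> Ad i1" "w1 \<in> G j1" "int i1 + j1 = 1" "a2 \<in> Ad i2" "w2 \<in> G j2" "int i2 + j2 = 2"
      using entryD[OF assms(1,2)] entryD[OF assms(3,4)] by metis
    show "ev \<beta> (tb sA br t1 t2) = - ev \<beta> (tb sA br t2 t1)"
      unfolding t by (rule anti_pt[OF assms(5) aw(1,2,4,5,3,6)])
  qed
  also have "\<dots> = - E \<beta> (TB y x)"
    unfolding E_tbr sl_neg by (subst sl_swap) simp
  finally show ?thesis .
qed

lemma jac_pt: assumes "bil \<beta>" "ap \<in> Ad ip" "wp \<in> G jp" "aq \<in> Ad iq" "wq \<in> G jq"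
   "ar \<in> Ad ir" "wr \<in> G jr" "int ip + jp = 1" "int iq + jq = 1" "int ir + jr = 1"
  shows "ev \<beta> (tb sA br (tb sA br ((ip, ap), (jp, wp)) ((iq, aq), (jq, wq))) ((ir, ar), (jr, wr)))
     + ev \<beta> (tb sA br (tb sA br ((iq, aq), (jq, wq)) ((ir, ar), (jr, wr))) ((ip, ap), (jp, wp)))
     + ev \<beta> (tb sA br (tb sA br ((ir, ar), (jr, wr)) ((ip, ap), (jp, wp))) ((iq, aq), (jq, wq))) = 0"
proof -
  have A1: "aq * ar * ap = sA (pm (int (iq + ir) * int ip)) (ap * aq * ar)"
    using A_comm[OF A_deg[OF assms(4,6)] assms(2)] by (simp add: mult.assoc)
  have A2: "ar * ap * aq = sA (pm (int ir * int (ip + iq))) (ap * aq * ar)"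
    using A_comm[OF assms(6) A_deg[OF assms(2,4)]] by (simp add: mult.assoc)
  have B1: "br (br wp wq) wr = - s (pm ((jp + jq) * jr)) (br wr (br wp wq))"
    by (rule br_anti[OF br_deg[OF assms(3,5)] assms(7)])
  have B2: "br (br wq wr) wp = - s (pm ((jq + jr) * jp)) (br wp (br wq wr))"
    by (rule br_anti[OF br_deg[OF assms(5,7)] assms(3)])
  have B3: "br (br wr wp) wq = - s (pm ((jr + jp) * jq)) (br wq (br wr wp))"
    by (rule br_anti[OF br_deg[OF assms(7,3)] assms(5)])
  let ?P = "ap * aq * ar"
  have J: "s (pm (jp * jr)) (br wp (br wq wr)) + s (pm (jq * jp)) (br wq (br wr wp))
          + s (pm (jr * jq)) (br wr (br wp wq)) = 0"
    by (rule jacobi[OF assms(3,5,7)])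
  have JB: "pm (jp * jr) * \<beta> ?P (br wp (br wq wr)) + pm (jq * jp) * \<beta> ?P (br wq (br wr wp))
          + pm (jr * jq) * \<beta> ?P (br wr (br wp wq)) = 0"
    using arg_cong[OF J, of "\<beta> ?P"] by (simp add: bilD[OF assms(1)])
  have j: "jp = 1 - int ip" "jq = 1 - int iq" "jr = 1 - int ir" using assms(8-10) by auto
  show ?thesis
    apply (simp add: A1 A2 B1 B2 B3 bilD[OF assms(1)] sAs sLs A_sm(1)[symmetric])
    using JB
    apply (simp add: j pm_def even_add even_mult_iff)
    apply (cases "even ip"; cases "even iq"; cases "even ir"; simp; linarith)
    done
qed

lemma jac: assumes "wf x" "tdeg 1 x" "bil \<beta>" shows "E \<beta> (TB (TB x x) x) = 0"
proof -
  define T where "T p q r = ev \<beta> (tb sA br (tb sA br p q) r)" for p q r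
  have S: "E \<beta> (TB (TB x x) x) = (\<Sum>p\<leftarrow>x. \<Sum>q\<leftarrow>x. \<Sum>r\<leftarrow>x. T p q r)"
    unfolding E_tbr by (simp add: tbr_alt sl_concat o_def T_def)
  have S2: "(\<Sum>p\<leftarrow>x. \<Sum>q\<leftarrow>x. \<Sum>r\<leftarrow>x. T q r p) = (\<Sum>p\<leftarrow>x. \<Sum>q\<leftarrow>x. \<Sum>r\<leftarrow>x. T p q r)"
  proof -
    have "(\<Sum>p\<leftarrow>x. \<Sum>q\<leftarrow>x. \<Sum>r\<leftarrow>x. T q r p) = (\<Sum>q\<leftarrow>x. \<Sum>p\<leftarrow>x. \<Sum>r\<leftarrow>x. T q r p)"
      by (rule sl_swap)
    also have "\<dots> = (\<Sum>q\<leftarrow>x. \<Sum>r\<leftarrow>x. \<Sum>p\<leftarrow>x. T q r p)"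
      by (rule sl_cong) (rule sl_swap)
    finally show ?thesis .
  qed
  have S3: "(\<Sum>p\<leftarrow>x. \<Sum>q\<leftarrow>x. \<Sum>r\<leftarrow>x. T r p q) = (\<Sum>p\<leftarrow>x. \<Sum>q\<leftarrow>x. \<Sum>r\<leftarrow>x. T p q r)"
  proof -
    have "(\<Sum>p\<leftarrow>x. \<Sum>q\<leftarrow>x. \<Sum>r\<leftarrow>x. T r p q) = (\<Sum>p\<leftarrow>x. \<Sum>r\<leftarrow>x. \<Sum>q\<leftarrow>x. T r p q)"
      by (rule sl_cong) (rule sl_swap)
    also have "\<dots> = (\<Sum>r\<leftarrow>x. \<Sum>p\<leftarrow>x. \<Sum>q\<leftarrow>x. T r p q)"
      by (rule sl_swap)
    finally show ?thesis .
  qed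
  have Z: "(\<Sum>p\<leftarrow>x. \<Sum>q\<leftarrow>x. \<Sum>r\<leftarrow>x. T p q r + T q r p + T r p q) = 0"
  proof (rule sl_zero, rule sl_zero, rule sl_zero)
    fix p q r assume "p \<in> set x" "q \<in> set x" "r \<in> set x"
    then obtain ip ap jp wp iq aq jq wq ir ar jr wr where
      t: "p = ((ip, ap), (jp, wp))" "q = ((iq, aq), (jq, wq))" "r = ((ir, ar), (jr, wr))"
      and aw: "ap \<in> Ad ip" "wp \<in> G jp" "int ip + jp = 1" "aq \<in> Ad iq" "wq \<in> G jq" "int iq + jq = 1"
        "ar \<in> Ad ir" "wr \<in> G jr" "int ir + jr = 1"
      using entryD[OF assms(1,2)] by metis
    show "T p q r + T q r p + T r p q = 0"
      unfolding T_def t by (rule jac_pt[OF assms(3) aw(1,2,4,5,7,8,3,6,9)])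
  qed
  have "(\<Sum>p\<leftarrow>x. \<Sum>q\<leftarrow>x. \<Sum>r\<leftarrow>x. T p q r + T q r p + T r p q) =
     (\<Sum>p\<leftarrow>x. \<Sum>q\<leftarrow>x. \<Sum>r\<leftarrow>x. T p q r) + (\<Sum>p\<leftarrow>x. \<Sum>q\<leftarrow>x. \<Sum>r\<leftarrow>x. T q r p)
     + (\<Sum>p\<leftarrow>x. \<Sum>q\<leftarrow>x. \<Sum>r\<leftarrow>x. T r p q)"
    by (simp only: sum_list_addf)
  then show ?thesis using S S2 S3 Z by simp
qed

lemma dF: assumes "wf x" "tdeg 1 x" "bil \<beta>"
  shows "E \<beta> (TD (MC x)) = E \<beta> (TB (MC x) x)"
proof -
  have w: "wf (TD x)" "tdeg 2 (TD x)" using wf_TD[OF assms(1)] tdeg_TD[OF assms(2)] by auto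
  have "E \<beta> (TD (MC x)) = E \<beta> (TD (TD x)) + 1/2 * E \<beta> (TD (TB x x))"
    by (simp add: MC_alt tdiff_append E_TD_half[OF assms(3)])
  also have "\<dots> = 1/2 * (E \<beta> (TB (TD x) x) - E \<beta> (TB x (TD x)))"
    using dd0[OF assms(1,3)] leib[OF assms(1,1,2,3)] by simp
  also have "\<dots> = E \<beta> (TB (TD x) x)"
    using anti[OF assms(1,2) w assms(3)] by simp
  also have "\<dots> = E \<beta> (TB (MC x) x)"
    using jac[OF assms] by (simp add: MC_alt tbr_append E_TB_half[OF assms(3)])
  finally show ?thesis .
qed

end



definition Phi :: "(rat \<Rightarrow> 'a::ab_group_add \<Rightarrow> 'a) \<Rightarrow> ('l \<Rightarrow> rat) \<Rightarrow> ((nat \<times> 'a) \<times> (int \<times> 'l)) list \<Rightarrow> 'a" where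
  "Phi sA \<zeta> x = sum_list (map (\<lambda>((i, a), (j, w)). sA (\<zeta> w) a) x)"

definition Zpart :: "(rat \<Rightarrow> 'l \<Rightarrow> 'l) \<Rightarrow> ('l \<Rightarrow> rat) \<Rightarrow> int \<Rightarrow> 'l \<Rightarrow> ((nat \<times> 'a) \<times> (int \<times> 'l)) list
   \<Rightarrow> ((nat \<times> 'a) \<times> (int \<times> 'l)) list" where
  "Zpart s \<zeta> q e x = map (\<lambda>((i, a), (j, w)). ((i, a), (q, s (\<zeta> w) e))) x"

definition negl :: "((nat \<times> 'a::uminus) \<times> (int \<times> 'l)) list \<Rightarrow> ((nat \<times> 'a) \<times> (int \<times> 'l)) list" where
  "negl x = map (\<lambda>((i, a), jw). ((i, - a), jw)) x"

lemma Phi_Nil[simp]: "Phi sA \<zeta> [] = 0" by (simp add: Phi_def)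
lemma Phi_append[simp]: "Phi sA \<zeta> (x @ y) = Phi sA \<zeta> x + Phi sA \<zeta> y" by (simp add: Phi_def)
lemma Phi_Cons[simp]: "Phi sA \<zeta> (((i, a), (j, w)) # y) = sA (\<zeta> w) a + Phi sA \<zeta> y" by (simp add: Phi_def)

lemma Phi_lin: assumes "Vector_Spaces.linear sA (*) f"
  shows "f (Phi sA \<zeta> x) = tens_eval (\<lambda>a w. f a * \<zeta> w) x"
proof (induct x)
  case Nil then show ?case using linD[OF assms] by simp
next
  case (Cons t x)
  obtain i a j w where t: "t = ((i, a), (j, w))" by (metis prod.collapse)
  show ?case using Cons linD[OF assms] by (simp add: t E_Cons mult.commute)
qed

lemma vsp: "vector_space s1 \<Longrightarrow> vector_space s2 \<Longrightarrow> vector_space_pair s1 s2"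
  by (simp add: vector_space_pair_def)

lemma functional_ex: assumes "vector_space s" "x \<noteq> 0"
  shows "\<exists>g. Vector_Spaces.linear s ((*) :: rat \<Rightarrow> rat \<Rightarrow> rat) g \<and> g x = 1"
proof -
  have "\<not> module.dependent s {x}" using vector_space.dependent_single[OF assms(1)] assms(2) by simp
  from vector_space_pair.linear_independent_extend[OF vsp[OF assms(1) vs_rat] this, of "\<lambda>_. 1"]
  show ?thesis by auto
qed

lemma sep: assumes "vector_space s" "\<And>f. Vector_Spaces.linear s ((*) :: rat \<Rightarrow> rat \<Rightarrow> rat) f \<Longrightarrow> f x = f y"
  shows "x = y"
proof (rule ccontr)
  assume "x \<noteq> y"
  then have "x - y \<noteq> 0" by simp
  from functional_ex[OF assms(1) this] obtain g where g: "Vector_Spaces.linear s (*) g" "g (x - y) = 1" by blast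
  then show False using assms(2)[OF g(1)] linD[OF g(1)] by simp
qed

lemma sl_in: assumes "graded_vs s G" "\<And>t. t \<in> set x \<Longrightarrow> f t \<in> G i"
  shows "sum_list (map f x) \<in> G i"
  using assms(2) by (induct x) (auto intro: gv_add[OF assms(1)] gv_0[OF assms(1)])

lemma lin_sl: "Vector_Spaces.linear s1 s2 g \<Longrightarrow> g (sum_list (map f x)) = sum_list (map (\<lambda>t. g (f t)) x)"
  by (induct x) (auto simp: linD)

lemma tmap_alt: "tmap f x = map (\<lambda>((i, a), (j, w)). ((i, a), (j, f w))) x"
  unfolding tmap_def by (rule map_cong) (auto split: prod.splits)

lemma E_tmap: "tens_eval \<beta> (tmap f x) = tens_eval (\<lambda>a w. \<beta> a (f w)) x"
  unfolding tmap_alt E_def' map_map by (rule sl_cong) (auto split: prod.splits)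

definition tme :: "('l \<Rightarrow> 'm) \<Rightarrow> ((nat \<times> 'a) \<times> (int \<times> 'l)) \<Rightarrow> ((nat \<times> 'a) \<times> (int \<times> 'm))" where
  "tme f t = (case t of ((i, a), (j, w)) \<Rightarrow> ((i, a), (j, f w)))"
lemma tme_simp[simp]: "tme f ((i, a), (j, w)) = ((i, a), (j, f w))" by (simp add: tme_def)
lemma tmap_tme: "tmap f x = map (tme f) x" unfolding tmap_def tme_def by (rule map_cong) (auto split: prod.splits)

lemma tmap_MC:
  assumes "\<And>w. f (dT w) = dL (f w)" "\<And>w v. f (brT w v) = brL (f w) (f v)"
  shows "tmap f (MC_F sA dA brT dT x) = MC_F sA dA brL dL (tmap f x)"
proof -
  have p1: "tme f (td1 dA t) = td1 dA (tme f t)" for t by (cases t) auto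
  have p2: "tme f (td2 sA dT t) = td2 sA dL (tme f t)" for t by (cases t) (auto simp: assms)
  have p3: "tme f (tb sA brT t1 t2) = tb sA brL (tme f t1) (tme f t2)" for t1 t2
    by (cases t1, cases t2) (auto simp: assms)
  have p4: "tme f (half sA t) = half sA (tme f t)" for t by (cases t) (auto simp: half_def)
  show ?thesis
    unfolding tmap_tme MC_alt tdiff_alt tbr_alt
    by (simp add: map_concat o_def p1 p2 p3 p4)
qed


lemma teq_sym: "teq s1 s2 x y \<Longrightarrow> teq s1 s2 y x" by (simp add: teq_def)

lemma tmap_append: "tmap f (x @ y) = tmap f x @ tmap f y" by (simp add: tmap_def)
lemma tmap_negl: "tmap f (negl x) = negl (tmap f x)"
  unfolding tmap_tme negl_def by (auto split: prod.splits)

lemma wf_tmap: assumes "\<And>j x. x \<in> G j \<Longrightarrow> f x \<in> G' j" "wf_tens Ad G x"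
  shows "wf_tens Ad G' (tmap f x)"
  using assms unfolding wf_tens_def tmap_tme by (auto split: prod.splits)

lemma wf_negl: assumes "graded_vs sA Ad" "wf_tens Ad G x" shows "wf_tens Ad G (negl x)"
  using assms(2) gv_neg[OF assms(1)] unfolding wf_tens_def negl_def by (auto split: prod.splits)
lemma tdeg_negl: "tdeg k x \<Longrightarrow> tdeg k (negl x)"
  unfolding tdeg_def negl_def by (auto split: prod.splits)

lemma E_negl: assumes "\<And>a w. \<beta> (- a) w = - \<beta> a w" shows "tens_eval \<beta> (negl x) = - tens_eval \<beta> x"
  unfolding negl_def E_def' map_map sl_neg[symmetric] by (rule sl_cong) (auto simp: assms split: prod.splits)

lemma wf_Zpart: assumes "graded_vs s G" "wf_tens Ad G x" "e \<in> G q" shows "wf_tens Ad G (Zpart s \<zeta> q e x)"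
  using assms(2) gv_scale[OF assms(1,3)] unfolding wf_tens_def Zpart_def by (auto split: prod.splits)

lemma Aplus_Zpart: "in_Aplus x \<Longrightarrow> in_Aplus (Zpart s \<zeta> q e x)"
  unfolding in_Aplus_def Zpart_def by (auto split: prod.splits)

lemma Zpart_ker: "((i, a), (j, w)) \<in> set (Zpart s \<zeta> q e x) \<Longrightarrow> \<exists>c. w = s c e"
  unfolding Zpart_def by auto

lemma Phi_Zpart: assumes "\<And>c. \<zeta> (s c e) = c" shows "Phi sA \<zeta> (Zpart s \<zeta> q e x) = Phi sA \<zeta> x"
  unfolding Phi_def Zpart_def map_map by (rule sl_cong) (auto simp: assms split: prod.splits)

lemma Aplus_MC: assumes "in_Aplus x" shows "in_Aplus (MC_F sA dA br dL x)"
  using assms unfolding in_Aplus_def MC_alt tdiff_alt tbr_alt half_def by (fastforce split: prod.splits)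

lemma E_tbr_append_r: "tens_eval \<beta> (tbr sA br x (y @ z)) = tens_eval \<beta> (tbr sA br x y) + tens_eval \<beta> (tbr sA br x z)"
  unfolding E_tbr by (simp add: sum_list_addf)

lemma Phi_deg: assumes "graded_vs sA Ad" "wf_tens Ad G x" "tdeg k x" "\<And>w j. w \<in> G j \<Longrightarrow> j \<noteq> q \<Longrightarrow> \<zeta> w = 0"
  shows "Phi sA \<zeta> x \<in> Ad (nat (k - q))"
proof -
  have pt: "sA (\<zeta> w) a \<in> Ad (nat (k - q))" if "((i, a), (j, w)) \<in> set x" for i a j w
  proof -
    have aw: "a \<in> Ad i" "w \<in> G j" "int i + j = k" using entryD[OF assms(2,3) that] by auto
    show ?thesis
    proof (cases "j = q")
      case True
      then have "i = nat (k - q)" using aw(3) by simp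
      then show ?thesis using gv_scale[OF assms(1) aw(1)] by simp
    next
      case False
      then show ?thesis using assms(4)[OF aw(2) False] gv_0[OF assms(1)] s_simps[OF assms(1)] by simp
    qed
  qed
  show ?thesis unfolding Phi_def
    by (rule sl_in[OF assms(1)]) (use pt in \<open>auto split: prod.splits\<close>)
qed

context tset begin

lemma Phi_TD: assumes "\<And>i a j w. ((i, a), (j, w)) \<in> set x \<Longrightarrow> d w = 0" "\<zeta> 0 = 0"
  shows "Phi sA \<zeta> (TD x) = dA (Phi sA \<zeta> x)"
  unfolding Phi_def tdiff_alt sl_concat map_map o_def lin_sl[OF dA_lin]
  by (rule sl_cong) (auto simp: assms dAs sAs split: prod.splits)

end




theorem lemma3p4:
  fixes sA :: "rat \<Rightarrow> 'a::ring \<Rightarrow> 'a" and Ad :: "nat \<Rightarrow> 'a set" and dA :: "'a \<Rightarrow> 'a"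
    and sT :: "rat \<Rightarrow> 'l::ab_group_add \<Rightarrow> 'l" and GT :: "int \<Rightarrow> 'l set"
    and brT :: "'l \<Rightarrow> 'l \<Rightarrow> 'l" and dT :: "'l \<Rightarrow> 'l"
    and sL :: "rat \<Rightarrow> 'm::ab_group_add \<Rightarrow> 'm" and GL :: "int \<Rightarrow> 'm set"
    and brL :: "'m \<Rightarrow> 'm \<Rightarrow> 'm" and dL :: "'m \<Rightarrow> 'm"
    and \<pi> :: "'l \<Rightarrow> 'm" and q :: int and e :: 'l
    and \<alpha> :: "('a, 'm) ftens" and \<alpha>t \<alpha>t1 :: "('a, 'l) ftens"
  assumes A: "cdga sA Ad dA"
    and \<lambda>: "mc_product_data sT GT brT dT sL GL brL dL \<pi> q e"
    and \<alpha>_wf: "wf_tens Ad GL \<alpha>" and \<alpha>_pos: "in_Aplus \<alpha>" and \<alpha>_deg: "tdeg_one \<alpha>"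
    and \<alpha>_MC: "teq sA sL (MC_F sA dA brL dL \<alpha>) []"
    and \<alpha>t_wf: "wf_tens Ad GT \<alpha>t" and \<alpha>t_pos: "in_Aplus \<alpha>t" and \<alpha>t_deg: "tdeg_one \<alpha>t"
    and \<alpha>t_lift: "teq sA sL (tmap \<pi> \<alpha>t) \<alpha>"
    and \<alpha>t1_wf: "wf_tens Ad GT \<alpha>t1" and \<alpha>t1_pos: "in_Aplus \<alpha>t1" and \<alpha>t1_deg: "tdeg_one \<alpha>t1"
    and \<alpha>t1_lift: "teq sA sL (tmap \<pi> \<alpha>t1) \<alpha>"
  shows "(\<exists>u. in_AplusZ Ad GT \<pi> u \<and> teq sA sT u (MC_F sA dA brT dT \<alpha>t)) \<and>
         (\<exists>u1. in_AplusZ Ad GT \<pi> u1 \<and> teq sA sT u1 (MC_F sA dA brT dT \<alpha>t1)) \<and>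
         (\<forall>u u1. in_AplusZ Ad GT \<pi> u \<longrightarrow> in_AplusZ Ad GT \<pi> u1 \<longrightarrow>
            teq sA sT u (MC_F sA dA brT dT \<alpha>t) \<longrightarrow> teq sA sT u1 (MC_F sA dA brT dT \<alpha>t1) \<longrightarrow>
            phiZ sA sT e u \<in> Ad (nat (2 - q)) \<and> dA (phiZ sA sT e u) = 0 \<and>
            phiZ sA sT e u1 \<in> Ad (nat (2 - q)) \<and> dA (phiZ sA sT e u1) = 0 \<and>
            (\<exists>b \<in> Ad (nat (1 - q)). phiZ sA sT e u - phiZ sA sT e u1 = dA b))"
proof -
  have LT: "dgla sT GT brT dT" and LL: "dgla sL GL brL dL"
    and hom: "dgla_hom sT GT brT dT sL GL brL dL \<pi>" and surj\<pi>: "surj \<pi>"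
    and cent: "\<And>x z. \<pi> z = 0 \<Longrightarrow> brT x z = 0"
    and Zd: "\<And>z. \<pi> z = 0 \<Longrightarrow> dT z = 0"
    and eG: "e \<in> GT q" and e0: "e \<noteq> 0" and ker: "{z. \<pi> z = 0} = range (\<lambda>c. sT c e)"
    using \<lambda> unfolding mc_product_data_def by blast+
  interpret T: tset sA Ad dA sT GT brT dT by unfold_locales (rule A, rule LT)
  interpret L: tset sA Ad dA sL GL brL dL by unfold_locales (rule A, rule LL)
  have \<pi>lin: "Vector_Spaces.linear sT sL \<pi>" and \<pi>deg: "\<And>j x. x \<in> GT j \<Longrightarrow> \<pi> x \<in> GL j"
    and \<pi>br: "\<And>x y. \<pi> (brT x y) = brL (\<pi> x) (\<pi> y)" and \<pi>d: "\<And>x. \<pi> (dT x) = dL (\<pi> x)"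
    using hom unfolding dgla_hom_def by blast+
  have kerD: "\<exists>c. z = sT c e" if "\<pi> z = 0" for z using ker that by blast
  have \<pi>e: "\<pi> (sT c e) = 0" for c using ker by blast
  have Cz: "brT z w = 0" if z0: "\<pi> z = 0" and wj: "w \<in> GT j" for z w j
  proof -
    obtain c where c: "z = sT c e" using kerD[OF z0] by blast
    have zq: "z \<in> GT q" using gv_scale[OF T.gL eG] c by simp
    show ?thesis using T.br_anti[OF zq wj] cent[OF z0] T.sLs by simp
  qed
  obtain \<sigma> where \<sigma>lin: "Vector_Spaces.linear sL sT \<sigma>" and \<sigma>: "\<And>m. \<pi> (\<sigma> m) = m"
    using vector_space_pair.linear_surjective_right_inverse[OF vsp[OF T.vsL L.vsL] \<pi>lin surj\<pi>]
    by (auto simp: fun_eq_iff)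
  obtain \<zeta>0 where \<zeta>0lin: "Vector_Spaces.linear sT (*) \<zeta>0" and \<zeta>0e: "\<zeta>0 e = 1"
    using functional_ex[OF T.vsL e0] by blast
  define pq where "pq = gop sT GT (\<lambda>j. if j = q then 1 else 0)"
  define \<zeta> where "\<zeta> = \<zeta>0 \<circ> pq"
  have \<zeta>lin: "Vector_Spaces.linear sT (*) \<zeta>"
    unfolding \<zeta>_def pq_def by (rule Vector_Spaces.linear_compose[OF gop_linear[OF T.gL] \<zeta>0lin])
  have \<zeta>e1: "\<zeta> e = 1" unfolding \<zeta>_def pq_def using gop_hom[OF T.gL eG] \<zeta>0e T.sLs by simp
  have \<zeta>e: "\<zeta> (sT c e) = c" for c using linD(2)[OF \<zeta>lin] \<zeta>e1 by simp
  have \<zeta>off: "\<zeta> w = 0" if "w \<in> GT j" "j \<noteq> q" for w j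
    unfolding \<zeta>_def pq_def using gop_hom[OF T.gL that(1)] that(2) T.sLs linD(3)[OF \<zeta>0lin] by simp
  have \<zeta>0': "\<zeta> 0 = 0" using linD(3)[OF \<zeta>lin] .
  define P where "P w = w - sT (\<zeta> w) e" for w
  have Padd: "P (x + y) = P x + P y" for x y
    unfolding P_def using linD(1)[OF \<zeta>lin] T.sLs by (simp add: algebra_simps)
  have Pscale: "P (sT c x) = sT c (P x)" for c x
    unfolding P_def using linD(2)[OF \<zeta>lin] T.sLs by simp
  have P\<sigma>\<pi>: "P (\<sigma> (\<pi> w)) = P w" for w
  proof -
    have "\<pi> (\<sigma> (\<pi> w) - w) = 0" using linD(5)[OF \<pi>lin] \<sigma> by simp
    then obtain c where c: "\<sigma> (\<pi> w) - w = sT c e" using kerD by blast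
    then have "\<sigma> (\<pi> w) = w + sT c e" by (simp add: algebra_simps)
    then show ?thesis unfolding P_def using linD(1)[OF \<zeta>lin] \<zeta>e T.sLs by simp
  qed
  have SA: "teq sA sT y (Zpart sT \<zeta> q e y)"
    if H: "\<And>\<beta>'. bilinear_map sA sL (*) \<beta>' \<Longrightarrow> tens_eval \<beta>' (tmap \<pi> y) = 0" for y
    unfolding teq_def
  proof (intro allI impI)
    fix \<beta> assume b: "bilinear_map sA sT (*) \<beta>"
    define \<beta>' where "\<beta>' a m = \<beta> a (P (\<sigma> m))" for a m
    have b': "bilinear_map sA sL (*) \<beta>'"
      unfolding \<beta>'_def
      by (rule L.bilI) (auto simp: T.bilD[OF b] linD[OF \<sigma>lin] Padd Pscale)
    have Pdec: "\<beta> a w = \<beta> a (sT (\<zeta> w) e) + \<beta> a (P w)" for a w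
      by (simp add: P_def T.bilD[OF b])
    have "tens_eval \<beta> y = tens_eval \<beta> (Zpart sT \<zeta> q e y) + tens_eval \<beta>' (tmap \<pi> y)"
      unfolding E_tmap unfolding Zpart_def E_def' map_map o_def sum_list_addf[symmetric]
      by (rule sl_cong) (clarsimp simp: \<beta>'_def P\<sigma>\<pi> split: prod.splits, rule Pdec)
    then show "tens_eval \<beta> y = tens_eval \<beta> (Zpart sT \<zeta> q e y)" using H[OF b'] by simp
  qed

  have wfL: "wf_tens Ad GL (tmap \<pi> x)" if "wf_tens Ad GT x" for x using wf_tmap[OF \<pi>deg that] .
  have MCvan: "tens_eval \<beta>' (tmap \<pi> (MC_F sA dA brT dT x)) = 0"
    if wx: "wf_tens Ad GT x" and lx: "teq sA sL (tmap \<pi> x) \<alpha>" and b': "bilinear_map sA sL (*) \<beta>'" for x \<beta>'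
  proof -
    have "tmap \<pi> (MC_F sA dA brT dT x) = MC_F sA dA brL dL (tmap \<pi> x)"
      by (rule tmap_MC) (simp_all add: \<pi>d \<pi>br)
    moreover have "teq sA sL (MC_F sA dA brL dL (tmap \<pi> x)) (MC_F sA dA brL dL \<alpha>)"
      by (rule L.MC_inv[OF wfL[OF wx] \<alpha>_wf lx])
    ultimately show ?thesis using L.tqD[OF _ b'] L.tqD[OF \<alpha>_MC b'] by simp
  qed
  have bf: "bilinear_map sA sT (*) (\<lambda>a w. f a * \<zeta> w)" if fl: "Vector_Spaces.linear sA (*) f" for f
    by (rule T.bilI) (simp_all add: linD[OF fl] linD[OF \<zeta>lin] distrib_left distrib_right mult.assoc)
  have PhiTeq: "Phi sA \<zeta> x = Phi sA \<zeta> y" if "teq sA sT x y" for x y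
    by (rule sep[OF T.vsA]) (simp add: Phi_lin T.tqD[OF that bf])
  have zc: "zcoef sT e w = \<zeta> w" if w0: "\<pi> w = 0" for w
  proof -
    obtain c where c: "w = sT c e" using kerD[OF w0] by blast
    have "zcoef sT e w = c" unfolding zcoef_def
      by (rule the_equality) (use c vector_space.scale_right_imp_eq[OF T.vsL e0] in auto)
    then show ?thesis using c \<zeta>e by simp
  qed
  have phiZ_eq: "phiZ sA sT e u = Phi sA \<zeta> u" if "in_AplusZ Ad GT \<pi> u" for u
  proof -
    have k: "\<forall>(ia, j, w)\<in>set u. \<pi> w = 0" using that unfolding in_AplusZ_def by blast
    show ?thesis unfolding phiZ_def Phi_def by (rule sl_cong) (use k in \<open>auto simp: zc split: prod.splits\<close>)
  qed
  have td1: "tdeg 1 x" if "tdeg_one x" for x using that by (simp add: tdeg_one_def tdeg_def)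
  have refl: "teq sA sT x x" for x by (simp add: teq_def)
  have ex: "\<exists>u. in_AplusZ Ad GT \<pi> u \<and> teq sA sT u (MC_F sA dA brT dT x)"
    if wx: "wf_tens Ad GT x" and px: "in_Aplus x" and lx: "teq sA sL (tmap \<pi> x) \<alpha>" for x
  proof (intro exI conjI)
    let ?u = "Zpart sT \<zeta> q e (MC_F sA dA brT dT x)"
    show "in_AplusZ Ad GT \<pi> ?u"
      unfolding in_AplusZ_def
    proof (intro conjI)
      show "wf_tens Ad GT ?u" by (rule wf_Zpart[OF T.gL T.wf_MC[OF wx] eG])
      show "in_Aplus ?u" by (rule Aplus_Zpart[OF Aplus_MC[OF px]])
      show "\<forall>(ia, j, w)\<in>set ?u. \<pi> w = 0" unfolding Zpart_def using \<pi>e by auto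
    qed
    show "teq sA sT ?u (MC_F sA dA brT dT x)"
      by (rule teq_sym, rule SA) (rule MCvan[OF wx lx])
  qed
  have deg: "Phi sA \<zeta> (MC_F sA dA brT dT x) \<in> Ad (nat (2 - q))" if "wf_tens Ad GT x" "tdeg 1 x" for x
    using Phi_deg[OF T.gA T.wf_MC[OF that(1)] T.tdeg_MC[OF that(2)] \<zeta>off] by simp
  have ukerD: "\<pi> w = 0" if "in_AplusZ Ad GT \<pi> u" "((i, a), (j, w)) \<in> set u" for u i a j w
    using that unfolding in_AplusZ_def by fastforce
  have cocyc: "dA (Phi sA \<zeta> u) = 0"
    if hu: "in_AplusZ Ad GT \<pi> u" and tu: "teq sA sT u (MC_F sA dA brT dT x)"
      and wx: "wf_tens Ad GT x" and dx: "tdeg 1 x" for u x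
  proof (rule sep[OF T.vsA])
    fix f :: "'a \<Rightarrow> rat" assume fl: "Vector_Spaces.linear sA (*) f"
    have wu: "wf_tens Ad GT u" using hu by (simp add: in_AplusZ_def)
    have "dA (Phi sA \<zeta> u) = Phi sA \<zeta> (tdiff sA dA dT u)"
      by (rule T.Phi_TD[symmetric]) (use ukerD[OF hu] Zd \<zeta>0' in auto)
    then have "f (dA (Phi sA \<zeta> u)) = tens_eval (\<lambda>a w. f a * \<zeta> w) (tdiff sA dA dT u)"
      by (simp add: Phi_lin[OF fl])
    also have "\<dots> = tens_eval (\<lambda>a w. f a * \<zeta> w) (tdiff sA dA dT (MC_F sA dA brT dT x))"
      by (rule T.tqD[OF T.TD_inv[OF wu T.wf_MC[OF wx] tu] bf[OF fl]])
    also have "\<dots> = tens_eval (\<lambda>a w. f a * \<zeta> w) (tbr sA brT (MC_F sA dA brT dT x) x)"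
      by (rule T.dF[OF wx dx bf[OF fl]])
    also have "\<dots> = tens_eval (\<lambda>a w. f a * \<zeta> w) (tbr sA brT u x)"
      by (rule T.TB_inv[OF T.wf_MC[OF wx] wu wx wx teq_sym[OF tu] refl bf[OF fl]])
    also have "\<dots> = 0"
    proof (rule T.central[OF _ bf[OF fl]])
      fix i a j w i' a' j' w' assume h1: "((i, a), (j, w)) \<in> set u" and h2: "((i', a'), (j', w')) \<in> set x"
      show "brT w w' = 0" using Cz[OF ukerD[OF hu h1] conjunct2[OF wfD[OF wx h2]]] .
    qed
    finally show "f (dA (Phi sA \<zeta> u)) = f 0" using linD(3)[OF fl] by simp
  qed

  have diff: "\<exists>b\<in>Ad (nat (1 - q)). Phi sA \<zeta> (MC_F sA dA brT dT \<alpha>t) - Phi sA \<zeta> (MC_F sA dA brT dT \<alpha>t1) = dA b"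
  proof -
    define \<delta> where "\<delta> = \<alpha>t @ negl \<alpha>t1"
    have w\<delta>: "wf_tens Ad GT \<delta>" unfolding \<delta>_def using \<alpha>t_wf wf_negl[OF T.gA \<alpha>t1_wf] by simp
    have d\<delta>: "tdeg 1 \<delta>" unfolding \<delta>_def using td1[OF \<alpha>t_deg] tdeg_negl[OF td1[OF \<alpha>t1_deg]] by simp
    have van: "tens_eval \<beta>' (tmap \<pi> \<delta>) = 0" if b': "bilinear_map sA sL (*) \<beta>'" for \<beta>'
      using L.tqD[OF \<alpha>t_lift b'] L.tqD[OF \<alpha>t1_lift b'] E_negl[of \<beta>', OF L.bilD(4)[OF b']]
      by (simp add: \<delta>_def tmap_append tmap_negl)
    define \<delta>z where "\<delta>z = Zpart sT \<zeta> q e \<delta>"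
    have t\<delta>: "teq sA sT \<delta> \<delta>z" unfolding \<delta>z_def by (rule SA) (rule van)
    have w\<delta>z: "wf_tens Ad GT \<delta>z" unfolding \<delta>z_def by (rule wf_Zpart[OF T.gL w\<delta> eG])
    have \<delta>zker: "\<pi> w = 0" if h: "((i, a), (j, w)) \<in> set \<delta>z" for i a j w
      using Zpart_ker[OF h[unfolded \<delta>z_def]] \<pi>e by auto
    have t1: "teq sA sT \<alpha>t (\<alpha>t1 @ \<delta>z)"
      unfolding teq_def
    proof (intro allI impI)
      fix \<beta> assume b: "bilinear_map sA sT (*) \<beta>"
      show "tens_eval \<beta> \<alpha>t = tens_eval \<beta> (\<alpha>t1 @ \<delta>z)"
        using T.tqD[OF t\<delta> b] E_negl[of \<beta>, OF T.bilD(4)[OF b]] by (simp add: \<delta>_def)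
    qed
    have wa1z: "wf_tens Ad GT (\<alpha>t1 @ \<delta>z)" using \<alpha>t1_wf w\<delta>z by simp
    have t2: "teq sA sT (MC_F sA dA brT dT \<alpha>t) (MC_F sA dA brT dT \<alpha>t1 @ tdiff sA dA dT \<delta>z)"
      unfolding teq_def
    proof (intro allI impI)
      fix \<beta> assume b: "bilinear_map sA sT (*) \<beta>"
      have c1: "tens_eval \<beta> (tbr sA brT \<alpha>t1 \<delta>z) = 0"
      proof (rule T.central[OF _ b])
        fix i a j w i' a' j' w' assume h1: "((i, a), (j, w)) \<in> set \<alpha>t1" and h2: "((i', a'), (j', w')) \<in> set \<delta>z"
        show "brT w w' = 0" using cent[OF \<delta>zker[OF h2]] .
      qed
      have c2: "tens_eval \<beta> (tbr sA brT \<delta>z \<alpha>t1) = 0"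
      proof (rule T.central[OF _ b])
        fix i a j w i' a' j' w' assume h1: "((i, a), (j, w)) \<in> set \<delta>z" and h2: "((i', a'), (j', w')) \<in> set \<alpha>t1"
        show "brT w w' = 0" using Cz[OF \<delta>zker[OF h1] conjunct2[OF wfD[OF \<alpha>t1_wf h2]]] .
      qed
      have c3: "tens_eval \<beta> (tbr sA brT \<delta>z \<delta>z) = 0"
      proof (rule T.central[OF _ b])
        fix i a j w i' a' j' w' assume h1: "((i, a), (j, w)) \<in> set \<delta>z" and h2: "((i', a'), (j', w')) \<in> set \<delta>z"
        show "brT w w' = 0" using Cz[OF \<delta>zker[OF h1] conjunct2[OF wfD[OF w\<delta>z h2]]] .
      qed
      have "tens_eval \<beta> (MC_F sA dA brT dT (\<alpha>t1 @ \<delta>z)) =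
            tens_eval \<beta> (MC_F sA dA brT dT \<alpha>t1) + tens_eval \<beta> (tdiff sA dA dT \<delta>z)"
        by (simp add: T.E_MC[OF b] tdiff_append tbr_append E_tbr_append_r c1 c2 c3 algebra_simps)
      then show "tens_eval \<beta> (MC_F sA dA brT dT \<alpha>t) =
            tens_eval \<beta> (MC_F sA dA brT dT \<alpha>t1 @ tdiff sA dA dT \<delta>z)"
        using T.tqD[OF T.MC_inv[OF \<alpha>t_wf wa1z t1] b] by simp
    qed
    have e1: "Phi sA \<zeta> (MC_F sA dA brT dT \<alpha>t) = Phi sA \<zeta> (MC_F sA dA brT dT \<alpha>t1) + Phi sA \<zeta> (tdiff sA dA dT \<delta>z)"
      using PhiTeq[OF t2] by simp
    have e2: "Phi sA \<zeta> (tdiff sA dA dT \<delta>z) = dA (Phi sA \<zeta> \<delta>z)"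
      by (rule T.Phi_TD) (use \<delta>zker Zd \<zeta>0' in auto)
    have e3: "Phi sA \<zeta> \<delta>z \<in> Ad (nat (1 - q))"
      unfolding \<delta>z_def Phi_Zpart[of \<zeta> sT e, OF \<zeta>e] using Phi_deg[OF T.gA w\<delta> d\<delta> \<zeta>off] by simp
    show ?thesis using e1 e2 e3 by (intro bexI[of _ "Phi sA \<zeta> \<delta>z"]) (auto simp: algebra_simps)
  qed
  show ?thesis
    apply (intro conjI)
      apply (rule ex[OF \<alpha>t_wf \<alpha>t_pos \<alpha>t_lift])
     apply (rule ex[OF \<alpha>t1_wf \<alpha>t1_pos \<alpha>t1_lift])
    apply (intro allI impI)
    subgoal premises prems for u u1
    proof -
      have eu: "phiZ sA sT e u = Phi sA \<zeta> (MC_F sA dA brT dT \<alpha>t)"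
        using phiZ_eq[OF prems(1)] PhiTeq[OF prems(3)] by simp
      have eu1: "phiZ sA sT e u1 = Phi sA \<zeta> (MC_F sA dA brT dT \<alpha>t1)"
        using phiZ_eq[OF prems(2)] PhiTeq[OF prems(4)] by simp
      have cu: "dA (phiZ sA sT e u) = 0"
        using cocyc[OF prems(1,3) \<alpha>t_wf td1[OF \<alpha>t_deg]] phiZ_eq[OF prems(1)] by simp
      have cu1: "dA (phiZ sA sT e u1) = 0"
        using cocyc[OF prems(2,4) \<alpha>t1_wf td1[OF \<alpha>t1_deg]] phiZ_eq[OF prems(2)] by simp
      show ?thesis
        using eu eu1 cu cu1 deg[OF \<alpha>t_wf td1[OF \<alpha>t_deg]] deg[OF \<alpha>t1_wf td1[OF \<alpha>t1_deg]] diff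
        by simp
    qed
    done
qed

end
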